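(* Let $G$ be a finite abelian group, $M$ a $\mathbb{Z}[G]$-lattice and $r\ge1$. Then the map $P$ restricts to an isomorphism of $\mathbb{Z}[G]$-modules \[ \wedge_0^rM\xrightarrow{\ \sim\ }(M,G)^r_\star . \]
   Context: A $\mathbb{Z}[G]$-lattice is a finitely generated $\mathbb{Z}[G]$-module that is free as a $\mathbb{Z}$-module; write $m^\sigma$ for the action of $\sigma\in G$ on $m\in M$. For a $\mathbb{Z}[G]$-module $N$ write $\mathbb{Q}N=\mathbb{Q}\otimes_{\mathbb{Z}}N$ and $N[G]=N\otimes_{\mathbb{Z}}\mathbb{Z}[G]$. Let $G$ act on $(\bigotimes^r_{\mathbb{Z}}M)[G]$ by $\sigma(m_1\otimes\dots\otimes m_r\otimes[\tau])=m_1\otimes\dots\otimes m_r\otimes[\sigma\tau]$, and for $\sigma\in G$ let $c_\sigma(m_1\otimes\dots\otimes m_r\otimes[\tau])=m_1^\sigma\otimes m_2\otimes\dots\otimes m_r\otimes[\tau]$. The symmetric group $\mathfrak{S}_r$ acts on $(\bigotimes^rM)[G]$ by permuting the tensor factors of $\bigotimes^rM$; $m$ is antisymmetric if $fm=\mathrm{sgn}(f)m$ for all $f\in\mathfrak S_r$. Define $(M,G)^r_\star=\{m\in(\bigotimes^r_{\mathbb{Z}}M)[G]: m\text{ antisymmetric and }c_\sigma(m)=\sigma m\ \forall\sigma\in G\}$. For $\varphi_1,\dots,\varphi_r\in\mathrm{Hom}_{\mathbb{Z}[G]}(M,\mathbb{Z}[G])$ let $\varphi_1\wedge\dots\wedge\varphi_r$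 be the map $\mathbb{Q}\wedge^r_{\mathbb{Z}[G]}M\to\mathbb{Q}[G]$, $m_1\wedge\dots\wedge m_r\mapsto\det(\varphi_i(m_j))$. Rubin's lattice is $\wedge_0^rM=\{m\in\mathbb{Q}\wedge^r_{\mathbb{Z}[G]}M:(\varphi_1\wedge\dots\wedge\varphi_r)(m)\in\mathbb{Z}[G]\ \forall\varphi_1,\dots,\varphi_r\}$. Define the $\mathbb{Z}[G]$-linear map $P:\mathbb{Q}\wedge^r_{\mathbb{Z}[G]}M\to\mathbb{Q}(\bigotimes^r_{\mathbb{Z}}M)[G]$ by $P(m_1\wedge\dots\wedge m_r)=\sum_{f\in\mathfrak S_r}\mathrm{sgn}(f)\bigotimes_{j=1}^r\Big(\sum_{\sigma\in G}m_{f(j)}^{\sigma^{-1}}[\sigma]\Big)$, where for elements $\sum_\sigma a_{j,\sigma}[\sigma]\in M[G]$ ($1\le j\le r$) their tensor $\bigotimes_j$ means $\sum_{\sigma_1,\dots,\sigma_r}a_{1,\sigma_1}\otimes\dots\otimes a_{r,\sigma_r}[\sigma_1\cdots\sigma_r]$. *)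

theory Defs
  imports "HOL-Library.Poly_Mapping" "HOL-Combinatorics.Permutations" "Jordan_Normal_Form.Determinant"
begin

(* The finite abelian group G is a type 'g of class ab_group_add and finite (written additively:
  the group law sigma tau is sigma + tau, sigma inverse is - sigma, unit is 0).
  The group ring Z[G] is ('g \<Rightarrow>\<^sub>0 int) and Q[G] is ('g \<Rightarrow>\<^sub>0 rat) (library Poly_Mapping,
  whose multiplication is convolution over 'g); [sigma] is Poly_Mapping.single sigma 1.
  A Z[G]-lattice M of Z-rank n is taken in coordinates: M = Z^n, realised as the functions
  nat \<Rightarrow> int vanishing outside {0..<n}, and sigma acts by the integer matrix rho sigma
  (entries rho sigma i j, i,j < n), so that m^sigma = (rho sigma) *v m. *)

definition lat :: "nat \<Rightarrow> (nat \<Rightarrow> int) set" where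
  "lat n = {v. \<forall>i\<ge>n. v i = 0}"

definition act :: "('g \<Rightarrow> nat \<Rightarrow> nat \<Rightarrow> int) \<Rightarrow> nat \<Rightarrow> 'g \<Rightarrow> (nat \<Rightarrow> int) \<Rightarrow> (nat \<Rightarrow> int)" where
  "act \<rho> n \<sigma> v = (\<lambda>i. if i < n then (\<Sum>j<n. \<rho> \<sigma> i j * v j) else 0)"

definition is_lattice_rep :: "nat \<Rightarrow> ('g::ab_group_add \<Rightarrow> nat \<Rightarrow> nat \<Rightarrow> int) \<Rightarrow> bool" where
  "is_lattice_rep n \<rho> \<longleftrightarrow>
     (\<forall>v\<in>lat n. act \<rho> n 0 v = v) \<and>
     (\<forall>\<sigma> \<tau>. \<forall>v\<in>lat n. act \<rho> n (\<sigma> + \<tau>) v = act \<rho> n \<sigma> (act \<rho> n \<tau> v))"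

definition tuples :: "nat \<Rightarrow> nat \<Rightarrow> (nat \<Rightarrow> int) list set" where
  "tuples n r = {t. length t = r \<and> set t \<subseteq> lat n}"

definition formal :: "nat \<Rightarrow> nat \<Rightarrow> ((nat \<Rightarrow> int) list \<Rightarrow> rat) set" where
  "formal n r = {x. finite {t. x t \<noteq> 0} \<and> {t. x t \<noteq> 0} \<subseteq> tuples n r}"

definition delta :: "'a \<Rightarrow> 'a \<Rightarrow> rat" where
  "delta t = (\<lambda>u. if u = t then 1 else 0)"

(* Generators of the relations defining \<and>^r_{Z[G]} M as a quotient of the free abelian group
  on r-tuples: additivity in each slot, Z[G]-balancedness (moving sigma between slots), and
  vanishing of tuples with two equal entries. *)
definition rel_gens :: "('g \<Rightarrow> nat \<Rightarrow> nat \<Rightarrow> int) \<Rightarrow> nat \<Rightarrow> nat \<Rightarrow> ((nat \<Rightarrow> int) list \<Rightarrow> rat) set" where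
  "rel_gens \<rho> n r =
     {(\<lambda>u. delta (t[i := (\<lambda>k. a k + b k)]) u - delta (t[i := a]) u - delta (t[i := b]) u)
        | t i a b. t \<in> tuples n r \<and> i < r \<and> a \<in> lat n \<and> b \<in> lat n}
   \<union> {(\<lambda>u. delta (t[i := act \<rho> n \<sigma> (t ! i)]) u - delta (t[j := act \<rho> n \<sigma> (t ! j)]) u)
        | t i j \<sigma>. t \<in> tuples n r \<and> i < r \<and> j < r}
   \<union> {delta t | t i j. t \<in> tuples n r \<and> i < j \<and> j < r \<and> t ! i = t ! j}"

inductive_set rel_span :: "('g \<Rightarrow> nat \<Rightarrow> nat \<Rightarrow> int) \<Rightarrow> nat \<Rightarrow> nat \<Rightarrow> ((nat \<Rightarrow> int) list \<Rightarrow> rat) set"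
  for \<rho> n r where
  zero: "(\<lambda>_. 0) \<in> rel_span \<rho> n r"
| gen: "g \<in> rel_gens \<rho> n r \<Longrightarrow> g \<in> rel_span \<rho> n r"
| add: "x \<in> rel_span \<rho> n r \<Longrightarrow> y \<in> rel_span \<rho> n r \<Longrightarrow> (\<lambda>u. x u + y u) \<in> rel_span \<rho> n r"
| smult: "x \<in> rel_span \<rho> n r \<Longrightarrow> (\<lambda>u. c * x u) \<in> rel_span \<rho> n r"

definition is_hom :: "('g::ab_group_add \<Rightarrow> nat \<Rightarrow> nat \<Rightarrow> int) \<Rightarrow> nat \<Rightarrow> ((nat \<Rightarrow> int) \<Rightarrow> ('g \<Rightarrow>\<^sub>0 int)) \<Rightarrow> bool" where
  "is_hom \<rho> n \<phi> \<longleftrightarrow>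
     (\<forall>u\<in>lat n. \<forall>v\<in>lat n. \<phi> (\<lambda>k. u k + v k) = \<phi> u + \<phi> v) \<and>
     (\<forall>\<sigma>. \<forall>u\<in>lat n. \<phi> (act \<rho> n \<sigma> u) = Poly_Mapping.single \<sigma> 1 * \<phi> u)"

(* (phi_1 \<and> ... \<and> phi_r)(x) in Q[G], for x a formal sum; on a tuple it is det(phi_i(m_j)). *)
definition wedge_hom :: "nat \<Rightarrow> (nat \<Rightarrow> (nat \<Rightarrow> int) \<Rightarrow> ('g::ab_group_add \<Rightarrow>\<^sub>0 int)) \<Rightarrow> ((nat \<Rightarrow> int) list \<Rightarrow> rat) \<Rightarrow> ('g \<Rightarrow>\<^sub>0 rat)" where
  "wedge_hom r \<phi>s x =
     (\<Sum>t\<in>{t. x t \<noteq> 0}. Poly_Mapping.single 0 (x t) *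
        Poly_Mapping.map of_int (det (mat r r (\<lambda>(i, j). \<phi>s i (t ! j)))))"

(* Rubin's lattice \<and>_0^r M (as a set of representatives). *)
definition rubin :: "('g::ab_group_add \<Rightarrow> nat \<Rightarrow> nat \<Rightarrow> int) \<Rightarrow> nat \<Rightarrow> nat \<Rightarrow> ((nat \<Rightarrow> int) list \<Rightarrow> rat) set" where
  "rubin \<rho> n r = {x \<in> formal n r. \<forall>\<phi>s. (\<forall>i<r. is_hom \<rho> n (\<phi>s i)) \<longrightarrow>
      wedge_hom r \<phi>s x \<in> range (Poly_Mapping.map (of_int :: int \<Rightarrow> rat))}"

(* A tensor T : nat list \<Rightarrow> 'g \<Rightarrow> rat stands for
  the sum of T is tau * e_{is!0} \<otimes> ... \<otimes> e_{is!(r-1)} \<otimes> [tau]. *)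
type_synonym ('g) tensor = "nat list \<Rightarrow> 'g \<Rightarrow> rat"

definition in_Qtensor :: "nat \<Rightarrow> nat \<Rightarrow> 'g tensor \<Rightarrow> bool" where
  "in_Qtensor n r T \<longleftrightarrow> (\<forall>is \<tau>. (length is \<noteq> r \<or> (\<exists>i\<in>set is. n \<le> i)) \<longrightarrow> T is \<tau> = 0)"

definition in_tensor :: "nat \<Rightarrow> nat \<Rightarrow> 'g tensor \<Rightarrow> bool" where
  "in_tensor n r T \<longleftrightarrow> in_Qtensor n r T \<and> (\<forall>is \<tau>. T is \<tau> \<in> \<int>)"

definition antisymmetric :: "nat \<Rightarrow> 'g tensor \<Rightarrow> bool" where
  "antisymmetric r T \<longleftrightarrow> (\<forall>f. f permutes {..<r} \<longrightarrow>
     (\<forall>is \<tau>. length is = r \<longrightarrow> T (map (\<lambda>j. is ! f j) [0..<r]) \<tau> = of_int (sign f) * T is \<tau>))"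

definition c_act :: "('g \<Rightarrow> nat \<Rightarrow> nat \<Rightarrow> int) \<Rightarrow> nat \<Rightarrow> 'g \<Rightarrow> 'g tensor \<Rightarrow> 'g tensor" where
  "c_act \<rho> n \<sigma> T = (\<lambda>is \<tau>. case is of [] \<Rightarrow> T [] \<tau>
      | i # rest \<Rightarrow> if i < n then (\<Sum>j<n. of_int (\<rho> \<sigma> i j) * T (j # rest) \<tau>) else 0)"

(* The G-action on the group ring factor: [tau] \<mapsto> [sigma tau]. *)
definition g_act :: "'g::ab_group_add \<Rightarrow> 'g tensor \<Rightarrow> 'g tensor" where
  "g_act \<sigma> T = (\<lambda>is \<tau>. T is (\<tau> - \<sigma>))"

definition star :: "('g::ab_group_add \<Rightarrow> nat \<Rightarrow> nat \<Rightarrow> int) \<Rightarrow> nat \<Rightarrow> nat \<Rightarrow> 'g tensor set" where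
  "star \<rho> n r = {T. in_tensor n r T \<and> antisymmetric r T \<and> (\<forall>\<sigma>. c_act \<rho> n \<sigma> T = g_act \<sigma> T)}"

(* P(m_1 \<and> ... \<and> m_r) in coordinates:
  sum over f in S_r of sgn f times the sum over (sigma_1,...,sigma_r) of
  m_{f 1}^{sigma_1^{-1}} \<otimes> ... \<otimes> m_{f r}^{sigma_r^{-1}} [sigma_1 ... sigma_r]. *)
definition P_tuple :: "('g::{ab_group_add,finite} \<Rightarrow> nat \<Rightarrow> nat \<Rightarrow> int) \<Rightarrow> nat \<Rightarrow> nat \<Rightarrow> (nat \<Rightarrow> int) list \<Rightarrow> 'g tensor" where
  "P_tuple \<rho> n r t = (\<lambda>is \<tau>. if length is = r then
     (\<Sum>f | f permutes {..<r}. of_int (sign f) *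
        (\<Sum>s \<in> {s \<in> PiE {..<r} (\<lambda>_. UNIV). (\<Sum>j<r. s j) = \<tau>}.
           (\<Prod>j<r. of_int (act \<rho> n (- s j) (t ! f j) (is ! j)))))
     else 0)"

definition P_map :: "('g::{ab_group_add,finite} \<Rightarrow> nat \<Rightarrow> nat \<Rightarrow> int) \<Rightarrow> nat \<Rightarrow> nat \<Rightarrow> ((nat \<Rightarrow> int) list \<Rightarrow> rat) \<Rightarrow> 'g tensor" where
  "P_map \<rho> n r x = (\<lambda>is \<tau>. \<Sum>t\<in>{t. x t \<noteq> 0}. x t * P_tuple \<rho> n r t is \<tau>)"

end

theory Submission
  imports Defs
begin


definition Sset :: "nat \<Rightarrow> 'g::ab_group_add \<Rightarrow> (nat \<Rightarrow> 'g) set" where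
  "Sset r \<tau> = {s \<in> PiE {..<r} (\<lambda>_. UNIV). (\<Sum>j<r. s j) = \<tau>}"

definition conv :: "nat \<Rightarrow> (nat \<Rightarrow> 'g::ab_group_add \<Rightarrow> 'a::comm_ring_1) \<Rightarrow> 'g \<Rightarrow> 'a" where
  "conv r F \<tau> = (\<Sum>s\<in>Sset r \<tau>. \<Prod>j<r. F j (s j))"

lemma finite_Sset[simp]: "finite (Sset r (\<tau>::'g::{ab_group_add,finite}))"
  unfolding Sset_def by (rule finite_subset[of _ "PiE {..<r} (\<lambda>_. UNIV)"]) (auto intro: finite_PiE)

lemma Sset_Suc:
  "Sset (Suc r) \<tau> = (\<lambda>(\<sigma>,s). s(r:=\<sigma>)) ` (SIGMA \<sigma>:UNIV. Sset r (\<tau> - \<sigma>))"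
proof (rule equalityI; rule subsetI)
  fix x assume x: "x \<in> Sset (Suc r) \<tau>"
  let ?s = "restrict x {..<r}"
  have 1: "x = ?s(r := x r)" using x unfolding Sset_def
    by (auto simp: PiE_def extensional_def fun_eq_iff)
  have 2: "?s \<in> Sset r (\<tau> - x r)" using x unfolding Sset_def
    by (auto simp: PiE_def extensional_def algebra_simps)
  show "x \<in> (\<lambda>(\<sigma>,s). s(r:=\<sigma>)) ` (SIGMA \<sigma>:UNIV. Sset r (\<tau> - \<sigma>))"
    using 1 2 by (auto intro!: image_eqI[of _ _ "(x r, ?s)"])
next
  fix x assume "x \<in> (\<lambda>(\<sigma>,s). s(r:=\<sigma>)) ` (SIGMA \<sigma>:UNIV. Sset r (\<tau> - \<sigma>))"
  then obtain \<sigma> s where x: "x = s(r:=\<sigma>)" and s: "s \<in> Sset r (\<tau> - \<sigma>)" by auto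
  have "(\<Sum>j<Suc r. x j) = (\<Sum>j<r. s j) + \<sigma>" using x by (simp add: sum.lessThan_Suc)
  then show "x \<in> Sset (Suc r) \<tau>" using s x unfolding Sset_def
    by (auto simp: PiE_def extensional_def)
qed

lemma inj_Sset_Suc: "inj_on (\<lambda>(\<sigma>,s). s(r:=\<sigma>)) (SIGMA \<sigma>:UNIV. Sset r (\<tau> - \<sigma>))"
proof (rule inj_onI, clarsimp)
  fix a s b s'
  assume s: "s \<in> Sset r (\<tau> - a)" and s': "s' \<in> Sset r (\<tau> - b)" and eq: "s(r := a) = s'(r := b)"
  have "a = b" using fun_cong[OF eq, of r] by simp
  moreover have "s = s'"
  proof
    fix j show "s j = s' j"
    proof (cases "j = r")
      case True then show ?thesis using s s' unfolding Sset_def by (auto simp: PiE_def extensional_def)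
    next
      case False then show ?thesis using fun_cong[OF eq, of j] by simp
    qed
  qed
  ultimately show "a = b \<and> s = s'" by simp
qed

lemma sum_Sigma': "finite A \<Longrightarrow> \<forall>x\<in>A. finite (B x) \<Longrightarrow> sum h (Sigma A B) = (\<Sum>x\<in>A. \<Sum>y\<in>B x. h (x,y))"
  by (subst sum.Sigma) auto

lemma conv_Suc:
  fixes F :: "nat \<Rightarrow> 'g::{ab_group_add,finite} \<Rightarrow> 'a::comm_ring_1"
  shows "conv (Suc r) F \<tau> = (\<Sum>\<sigma>\<in>UNIV. conv r F (\<tau> - \<sigma>) * F r \<sigma>)"
proof -
  have "conv (Suc r) F \<tau> = (\<Sum>x\<in>(SIGMA \<sigma>:UNIV. Sset r (\<tau> - \<sigma>)). \<Prod>j<Suc r. F j (((\<lambda>(\<sigma>,s). s(r:=\<sigma>)) x) j))"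
    unfolding conv_def Sset_Suc by (subst sum.reindex[OF inj_Sset_Suc]) (simp add: comp_def)
  also have "\<dots> = (\<Sum>\<sigma>\<in>UNIV. \<Sum>s\<in>Sset r (\<tau> - \<sigma>). \<Prod>j<Suc r. F j ((s(r:=\<sigma>)) j))"
    by (subst sum_Sigma') auto
  also have "\<dots> = (\<Sum>\<sigma>\<in>UNIV. \<Sum>s\<in>Sset r (\<tau> - \<sigma>). (\<Prod>j<r. F j (s j)) * F r \<sigma>)"
    by (intro sum.cong refl) (simp add: prod.lessThan_Suc)
  also have "\<dots> = (\<Sum>\<sigma>\<in>UNIV. conv r F (\<tau> - \<sigma>) * F r \<sigma>)"
    unfolding conv_def by (simp add: sum_distrib_right)
  finally show ?thesis .
qed

lemma conv_0: "conv 0 F \<tau> = (if \<tau> = 0 then 1 else 0)"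
proof -
  have "Sset 0 \<tau> = (if \<tau> = 0 then {\<lambda>_. undefined} else {})"
    unfolding Sset_def by auto
  then show ?thesis unfolding conv_def by simp
qed

lemma conv_one:
  assumes "r \<ge> 1"
  shows "conv r (\<lambda>_ _. 1::'a::comm_ring_1) (\<tau>::'g::{ab_group_add,finite}) = of_nat (card (UNIV::'g set)) ^ (r - 1)"
  using assms
proof (induction r arbitrary: \<tau>)
  case 0 then show ?case by simp
next
  case (Suc r)
  show ?case
  proof (cases "r = 0")
    case True
    have "conv (Suc 0) (\<lambda>_ _. 1::'a) \<tau> = (\<Sum>\<sigma>\<in>UNIV. if \<sigma> = \<tau> then 1 else 0)"
      unfolding conv_Suc conv_0 by (intro sum.cong) auto
    then show ?thesis using True by simp
  next
    case False
    then have "conv (Suc r) (\<lambda>_ _. 1::'a) \<tau> = (\<Sum>\<sigma>\<in>(UNIV::'g set). of_nat (card (UNIV::'g set)) ^ (r - 1))"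
      unfolding conv_Suc using Suc.IH by simp
    also have "\<dots> = of_nat (card (UNIV::'g set)) ^ (Suc r - 1)" using False
      by (simp add: power_eq_if)
    finally show ?thesis .
  qed
qed

lemma lookup_mult_fin:
  fixes f g :: "'g::{ab_group_add,finite} \<Rightarrow>\<^sub>0 'a::comm_ring_1"
  shows "Poly_Mapping.lookup (f * g) k = (\<Sum>l\<in>UNIV. Poly_Mapping.lookup f (k - l) * Poly_Mapping.lookup g l)"
proof -
  have "Poly_Mapping.lookup (f * g) k = (\<Sum>l\<in>UNIV. Poly_Mapping.lookup f l * (\<Sum>q\<in>UNIV. (if q = k - l then Poly_Mapping.lookup g q else 0)))"
  proof -
    have e: "\<And>h::'g \<Rightarrow> 'a. Sum_any h = sum h UNIV" by (rule Sum_any.expand_superset) auto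
    show ?thesis unfolding lookup_mult e
      by (intro sum.cong refl arg_cong[where f="\<lambda>x. _ * x"]) (auto simp: when_def algebra_simps)
  qed
  also have "\<dots> = (\<Sum>l\<in>UNIV. Poly_Mapping.lookup f l * Poly_Mapping.lookup g (k - l))" by simp
  also have "\<dots> = (\<Sum>l\<in>UNIV. Poly_Mapping.lookup f (k - l) * Poly_Mapping.lookup g l)"
    by (rule sum.reindex_bij_witness[where i="\<lambda>l. k - l" and j="\<lambda>l. k - l"]) auto
  finally show ?thesis .
qed

lemma lookup_prod_conv:
  fixes a :: "nat \<Rightarrow> 'g::{ab_group_add,finite} \<Rightarrow>\<^sub>0 'a::comm_ring_1"
  shows "Poly_Mapping.lookup (\<Prod>i<r. a i) \<tau> = conv r (\<lambda>i \<sigma>. Poly_Mapping.lookup (a i) \<sigma>) \<tau>"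
proof (induction r arbitrary: \<tau>)
  case 0
  then show ?case by (auto simp add: conv_0 lookup_one when_def)
next
  case (Suc r)
  show ?case unfolding conv_Suc prod.lessThan_Suc lookup_mult_fin Suc.IH ..
qed

lemma sum_upd:
  fixes s :: "nat \<Rightarrow> 'g::ab_group_add"
  assumes "j0 < r"
  shows "(\<Sum>j<r. (s(j0 := v)) j) = (\<Sum>j<r. s j) - s j0 + v"
proof -
  have "(\<Sum>j<r. (s(j0 := v)) j) = (s(j0 := v)) j0 + (\<Sum>j\<in>{..<r}-{j0}. (s(j0 := v)) j)"
    using assms by (subst sum.remove[of _ j0]) auto
  also have "(\<Sum>j\<in>{..<r}-{j0}. (s(j0 := v)) j) = (\<Sum>j\<in>{..<r}-{j0}. s j)"
    by (intro sum.cong) auto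
  also have "\<dots> = (\<Sum>j<r. s j) - s j0"
    using assms by (subst sum.remove[of _ j0, where A="{..<r}"]) auto
  finally show ?thesis by (simp add: algebra_simps)
qed

lemma upd_in_Sset:
  assumes "s \<in> Sset r \<tau>" "j0 < r"
  shows "s(j0 := s j0 + d) \<in> Sset r (\<tau> + d)"
proof -
  have "(\<Sum>j<r. (s(j0 := s j0 + d)) j) = (\<Sum>j<r. s j) - s j0 + (s j0 + d)"
    by (rule sum_upd[OF assms(2)])
  then show ?thesis using assms unfolding Sset_def by (auto simp: PiE_def extensional_def algebra_simps)
qed

lemma conv_split:
  assumes "j0 < r"
  shows "conv r F \<tau> = (\<Sum>s\<in>Sset r \<tau>. F j0 (s j0) * (\<Prod>j\<in>{..<r}-{j0}. F j (s j)))"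
  unfolding conv_def using assms by (intro sum.cong refl) (subst prod.remove[of _ j0], auto)

lemma conv_shift:
  fixes F :: "nat \<Rightarrow> 'g::{ab_group_add,finite} \<Rightarrow> 'a::comm_ring_1"
  assumes "j0 < r"
  shows "conv r (F(j0 := \<lambda>x. G (x - \<sigma>))) \<tau> = conv r (F(j0 := G)) (\<tau> - \<sigma>)"
proof -
  have "conv r (F(j0 := \<lambda>x. G (x - \<sigma>))) \<tau> =
     (\<Sum>s\<in>Sset r \<tau>. G (s j0 - \<sigma>) * (\<Prod>j\<in>{..<r}-{j0}. F j (s j)))"
    using assms by (subst conv_split[of j0]) (auto intro!: sum.cong prod.cong)
  also have "\<dots> = (\<Sum>s\<in>Sset r (\<tau> - \<sigma>). G (s j0) * (\<Prod>j\<in>{..<r}-{j0}. F j (s j)))"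
  proof (rule sum.reindex_bij_witness[where j="\<lambda>s. s(j0 := s j0 + (- \<sigma>))" and i="\<lambda>s. s(j0 := s j0 + \<sigma>)"])
    fix s assume "s \<in> Sset r \<tau>"
    then show "s(j0 := s j0 + - \<sigma>) \<in> Sset r (\<tau> - \<sigma>)"
      using upd_in_Sset[of s r \<tau> j0 "-\<sigma>"] assms by simp
  next
    fix s assume "s \<in> Sset r (\<tau> - \<sigma>)"
    then show "s(j0 := s j0 + \<sigma>) \<in> Sset r \<tau>"
      using upd_in_Sset[of s r "\<tau> - \<sigma>" j0 "\<sigma>"] assms by simp
  next
    fix s
    show "G ((s(j0 := s j0 + - \<sigma>)) j0) * (\<Prod>j\<in>{..<r}-{j0}. F j ((s(j0 := s j0 + - \<sigma>)) j)) =
       G (s j0 - \<sigma>) * (\<Prod>j\<in>{..<r}-{j0}. F j (s j))"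
      by (auto intro!: prod.cong)
  qed auto
  also have "\<dots> = conv r (F(j0 := G)) (\<tau> - \<sigma>)"
    using assms by (subst conv_split[of j0]) (auto intro!: sum.cong prod.cong)
  finally show ?thesis .
qed

lemma conv_lin:
  fixes F :: "nat \<Rightarrow> 'g::{ab_group_add,finite} \<Rightarrow> 'a::comm_ring_1"
  assumes "j0 < r" "finite K"
  shows "conv r (F(j0 := \<lambda>x. \<Sum>k\<in>K. c k * G k x)) \<tau> = (\<Sum>k\<in>K. c k * conv r (F(j0 := G k)) \<tau>)"
proof -
  have "conv r (F(j0 := \<lambda>x. \<Sum>k\<in>K. c k * G k x)) \<tau> =
     (\<Sum>s\<in>Sset r \<tau>. (\<Sum>k\<in>K. c k * G k (s j0)) * (\<Prod>j\<in>{..<r}-{j0}. F j (s j)))"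
    using assms by (subst conv_split[of j0]) (auto intro!: sum.cong prod.cong)
  also have "\<dots> = (\<Sum>k\<in>K. c k * (\<Sum>s\<in>Sset r \<tau>. G k (s j0) * (\<Prod>j\<in>{..<r}-{j0}. F j (s j))))"
    by (simp add: sum_distrib_right sum_distrib_left mult.assoc) (rule sum.swap)
  also have "\<dots> = (\<Sum>k\<in>K. c k * conv r (F(j0 := G k)) \<tau>)"
    using assms by (intro sum.cong refl arg_cong[where f="\<lambda>x. _ * x"]) (subst conv_split[of j0], auto intro!: sum.cong prod.cong)
  finally show ?thesis .
qed

lemma conv_perm:
  fixes F :: "nat \<Rightarrow> 'g::{ab_group_add,finite} \<Rightarrow> 'a::comm_ring_1"
  assumes g: "g permutes {..<r}"
  shows "conv r (\<lambda>j. F (g j)) \<tau> = conv r F \<tau>"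
  unfolding conv_def
proof (rule sum.reindex_bij_witness[where j="\<lambda>s. restrict (s \<circ> Hilbert_Choice.inv g) {..<r}" and i="\<lambda>s. restrict (s \<circ> g) {..<r}"])
  have gi: "\<And>x. g (Hilbert_Choice.inv g x) = x" "\<And>x. Hilbert_Choice.inv g (g x) = x" using g permutes_inverses by metis+
  have gin: "\<And>x. g x < r \<longleftrightarrow> x < r" "\<And>x. Hilbert_Choice.inv g x < r \<longleftrightarrow> x < r"
    using permutes_in_image[OF g] permutes_in_image[OF permutes_inv[OF g]] by auto
  have sg: "\<And>s::nat\<Rightarrow>'g. (\<Sum>j<r. s (g j)) = (\<Sum>j<r. s j)" "\<And>s::nat\<Rightarrow>'g. (\<Sum>j<r. s (Hilbert_Choice.inv g j)) = (\<Sum>j<r. s j)"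
  proof -
    fix s :: "nat \<Rightarrow> 'g"
    show "(\<Sum>j<r. s (g j)) = (\<Sum>j<r. s j)" using sum.permute[OF g, of s] by (simp add: comp_def)
    show "(\<Sum>j<r. s (Hilbert_Choice.inv g j)) = (\<Sum>j<r. s j)"
      using sum.permute[OF permutes_inv[OF g], of s] by (simp add: comp_def)
  qed
  fix s
  show "s \<in> Sset r \<tau> \<Longrightarrow> restrict (restrict (s \<circ> Hilbert_Choice.inv g) {..<r} \<circ> g) {..<r} = s"
    unfolding Sset_def by (auto simp: fun_eq_iff gi gin PiE_def extensional_def)
  show "s \<in> Sset r \<tau> \<Longrightarrow> restrict (s \<circ> Hilbert_Choice.inv g) {..<r} \<in> Sset r \<tau>"
    unfolding Sset_def using sg(2)[of s] by (auto simp: gin PiE_def extensional_def)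
  show "s \<in> Sset r \<tau> \<Longrightarrow> restrict (restrict (s \<circ> g) {..<r} \<circ> Hilbert_Choice.inv g) {..<r} = s"
    unfolding Sset_def by (auto simp: fun_eq_iff gi gin PiE_def extensional_def)
  show "s \<in> Sset r \<tau> \<Longrightarrow> restrict (s \<circ> g) {..<r} \<in> Sset r \<tau>"
    unfolding Sset_def using sg(1)[of s] by (auto simp: gin PiE_def extensional_def)
  show "s \<in> Sset r \<tau> \<Longrightarrow> (\<Prod>j<r. F j (restrict (s \<circ> Hilbert_Choice.inv g) {..<r} j)) = (\<Prod>j<r. F (g j) (s j))"
    using prod.permute[OF g, of "\<lambda>j. F j (restrict (s \<circ> Hilbert_Choice.inv g) {..<r} j)"]
    by (auto simp: comp_def gi gin intro!: prod.cong)
qed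


lemma act_lat[simp]: "act \<rho> n \<sigma> v \<in> lat n"
  unfolding act_def lat_def by auto

lemma act_ge[simp]: "i \<ge> n \<Longrightarrow> act \<rho> n \<sigma> v i = 0"
  unfolding act_def by auto

lemma act_add: "act \<rho> n \<sigma> (\<lambda>k. u k + v k) i = act \<rho> n \<sigma> u i + act \<rho> n \<sigma> v i"
  unfolding act_def by (auto simp: algebra_simps sum.distrib)

lemma act_comp:
  assumes "is_lattice_rep n \<rho>" "v \<in> lat n"
  shows "act \<rho> n \<sigma> (act \<rho> n \<tau> v) = act \<rho> n (\<sigma> + \<tau>) v"
  using assms unfolding is_lattice_rep_def by auto

lemma act_zero:
  assumes "is_lattice_rep n \<rho>" "v \<in> lat n"
  shows "act \<rho> n 0 v = v"
  using assms unfolding is_lattice_rep_def by auto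

lemma act_expand: "i < n \<Longrightarrow> act \<rho> n \<sigma> v i = (\<Sum>j<n. \<rho> \<sigma> i j * v j)"
  unfolding act_def by auto

definition PF :: "('g::{ab_group_add,finite} \<Rightarrow> nat \<Rightarrow> nat \<Rightarrow> int) \<Rightarrow> nat \<Rightarrow> (nat \<Rightarrow> int) list \<Rightarrow> nat list \<Rightarrow> (nat \<Rightarrow> nat) \<Rightarrow> nat \<Rightarrow> 'g \<Rightarrow> rat" where
  "PF \<rho> n t is f = (\<lambda>j \<sigma>. of_int (act \<rho> n (- \<sigma>) (t ! f j) (is ! j)))"

lemma P_tuple_conv:
  "P_tuple \<rho> n r t is \<tau> = (if length is = r then
     (\<Sum>f | f permutes {..<r}. of_int (sign f) * conv r (PF \<rho> n t is f) \<tau>) else 0)"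
  unfolding P_tuple_def conv_def Sset_def PF_def by simp

lemma conv_cong: "(\<And>j \<sigma>. j < r \<Longrightarrow> F j \<sigma> = F' j \<sigma>) \<Longrightarrow> conv r F \<tau> = conv r F' \<tau>"
  unfolding conv_def by (intro sum.cong prod.cong) auto

lemma conv_zero_factor: "j0 < r \<Longrightarrow> (\<And>\<sigma>. F j0 \<sigma> = 0) \<Longrightarrow> conv r F \<tau> = 0"
  unfolding conv_def by (intro sum.neutral ballI prod_zero) auto

lemma finite_permutes_lt[simp]: "finite {f. f permutes {..<(r::nat)}}"
  by (rule finite_permutations) simp

lemma tuples_nth: "t \<in> tuples n r \<Longrightarrow> k < r \<Longrightarrow> t ! k \<in> lat n"
  unfolding tuples_def by auto

lemma tuples_len: "t \<in> tuples n r \<Longrightarrow> length t = r"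
  unfolding tuples_def by auto

lemma perm_facts:
  assumes "f permutes {..<(r::nat)}"
  shows "\<And>x. f (Hilbert_Choice.inv f x) = x" "\<And>x. Hilbert_Choice.inv f (f x) = x"
    "\<And>x. f x < r \<longleftrightarrow> x < r" "\<And>x. Hilbert_Choice.inv f x < r \<longleftrightarrow> x < r"
  using assms permutes_inverses permutes_in_image[OF assms] permutes_in_image[OF permutes_inv[OF assms]]
  by (metis, metis, auto)

lemma P_bal:
  assumes R: "is_lattice_rep n \<rho>" and t: "t \<in> tuples n r" and i: "i < r"
  shows "P_tuple \<rho> n r (t[i := act \<rho> n \<sigma> (t ! i)]) is \<tau> = P_tuple \<rho> n r t is (\<tau> - \<sigma>)"
proof -
  have lt: "length t = r" using t by (rule tuples_len)
  { fix f assume f: "f permutes {..<r}"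
    note pf = perm_facts[OF f]
    define j0 where "j0 = Hilbert_Choice.inv f i"
    have j0: "j0 < r" "f j0 = i" using i pf unfolding j0_def by auto
    have "conv r (PF \<rho> n (t[i := act \<rho> n \<sigma> (t ! i)]) is f) \<tau> =
        conv r ((PF \<rho> n t is f)(j0 := \<lambda>x. PF \<rho> n t is f j0 (x - \<sigma>))) \<tau>"
    proof (rule conv_cong)
      fix j x assume j: "j < r"
      show "PF \<rho> n (t[i := act \<rho> n \<sigma> (t ! i)]) is f j x = ((PF \<rho> n t is f)(j0 := \<lambda>x. PF \<rho> n t is f j0 (x - \<sigma>))) j x"
      proof (cases "j = j0")
        case True
        then show ?thesis using j0 lt i act_comp[OF R tuples_nth[OF t i], of "-x" \<sigma>]
          by (simp add: PF_def algebra_simps)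
      next
        case False
        then have "f j \<noteq> i" using j0 pf by metis
        then show ?thesis using False by (simp add: PF_def)
      qed
    qed
    also have "\<dots> = conv r (PF \<rho> n t is f) (\<tau> - \<sigma>)"
      using conv_shift[OF j0(1), of "PF \<rho> n t is f" "PF \<rho> n t is f j0" \<sigma> \<tau>] by simp
    finally have "conv r (PF \<rho> n (t[i := act \<rho> n \<sigma> (t ! i)]) is f) \<tau> = conv r (PF \<rho> n t is f) (\<tau> - \<sigma>)" .
  }
  then show ?thesis unfolding P_tuple_conv by (auto intro!: sum.cong)
qed

lemma P_add:
  assumes t: "t \<in> tuples n r" and i: "i < r"
  shows "P_tuple \<rho> n r (t[i := (\<lambda>k. a k + b k)]) is \<tau> = P_tuple \<rho> n r (t[i := a]) is \<tau> + P_tuple \<rho> n r (t[i := b]) is \<tau>"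
proof -
  have lt: "length t = r" using t by (rule tuples_len)
  { fix f assume f: "f permutes {..<r}"
    note pf = perm_facts[OF f]
    define j0 where "j0 = Hilbert_Choice.inv f i"
    have j0: "j0 < r" "f j0 = i" using i pf unfolding j0_def by auto
    define G where "G = (\<lambda>c x. if c then PF \<rho> n (t[i := a]) is f j0 x else PF \<rho> n (t[i := b]) is f j0 x)"
    have "conv r (PF \<rho> n (t[i := (\<lambda>k. a k + b k)]) is f) \<tau> =
        conv r ((PF \<rho> n t is f)(j0 := \<lambda>x. \<Sum>c\<in>UNIV. 1 * G c x)) \<tau>"
    proof (rule conv_cong)
      fix j x assume j: "j < r"
      show "PF \<rho> n (t[i := (\<lambda>k. a k + b k)]) is f j x = ((PF \<rho> n t is f)(j0 := \<lambda>x. \<Sum>c\<in>UNIV. 1 * G c x)) j x"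
      proof (cases "j = j0")
        case True
        then show ?thesis using j0 lt i unfolding G_def
          by (simp add: PF_def act_add UNIV_bool)
      next
        case False
        then have "f j \<noteq> i" using j0 pf by metis
        then show ?thesis using False by (simp add: PF_def)
      qed
    qed
    also have "\<dots> = (\<Sum>c\<in>UNIV. 1 * conv r ((PF \<rho> n t is f)(j0 := G c)) \<tau>)"
      by (rule conv_lin[OF j0(1)]) simp
    also have "\<dots> = conv r (PF \<rho> n (t[i := a]) is f) \<tau> + conv r (PF \<rho> n (t[i := b]) is f) \<tau>"
    proof -
      have "conv r ((PF \<rho> n t is f)(j0 := G c)) \<tau> = conv r (PF \<rho> n (t[i := if c then a else b]) is f) \<tau>" for c
      proof (rule conv_cong)
        fix j x assume j: "j < r"
        show "((PF \<rho> n t is f)(j0 := G c)) j x = PF \<rho> n (t[i := if c then a else b]) is f j x"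
        proof (cases "j = j0")
          case True then show ?thesis using j0 lt i unfolding G_def by (simp add: PF_def)
        next
          case False
          then have "f j \<noteq> i" using j0 pf by metis
          then show ?thesis using False by (simp add: PF_def)
        qed
      qed
      then show ?thesis by (simp add: UNIV_bool)
    qed
    finally have "conv r (PF \<rho> n (t[i := (\<lambda>k. a k + b k)]) is f) \<tau> = conv r (PF \<rho> n (t[i := a]) is f) \<tau> + conv r (PF \<rho> n (t[i := b]) is f) \<tau>" .
  }
  then show ?thesis unfolding P_tuple_conv by (auto simp: sum.distrib distrib_left intro!: sum.cong)
qed

lemma perm_permutation: "f permutes {..<(r::nat)} \<Longrightarrow> permutation f"
  by (rule permutes_imp_permutation) auto

lemma sum_perm_alt:
  fixes X :: "(nat \<Rightarrow> nat) \<Rightarrow> rat"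
  assumes a: "a < r" "b < r" "a \<noteq> b"
    and X: "\<And>f. f permutes {..<r} \<Longrightarrow> X (Transposition.transpose a b \<circ> f) = X f"
  shows "(\<Sum>f | f permutes {..<r}. of_int (sign f) * X f) = 0"
proof -
  let ?w = "Transposition.transpose a b"
  have w: "?w permutes {..<r}" using a by (intro permutes_swap_id) auto
  have "(\<Sum>f | f permutes {..<r}. of_int (sign f) * X f) = (\<Sum>f | f permutes {..<r}. of_int (sign (?w \<circ> f)) * X (?w \<circ> f))"
    by (rule sum.reindex_bij_witness[where i="\<lambda>f. ?w \<circ> f" and j="\<lambda>f. ?w \<circ> f"])
       (auto simp: comp_assoc[symmetric] permutes_compose[OF _ w])
  also have "\<dots> = (\<Sum>f | f permutes {..<r}. - (of_int (sign f) * X f))"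
    using a by (intro sum.cong refl)
      (simp add: X sign_compose[OF permutes_imp_permutation[OF _ w] perm_permutation] sign_swap_id)
  finally show ?thesis by (simp add: sum_negf)
qed

lemma P_alt:
  assumes ij: "i < j" "j < r" and eq: "t ! i = t ! j"
  shows "P_tuple \<rho> n r t is \<tau> = 0"
proof -
  have "(\<Sum>f | f permutes {..<r}. of_int (sign f) * conv r (PF \<rho> n t is f) \<tau>) = 0"
  proof (rule sum_perm_alt[of i r j])
    fix f
    have "t ! (Transposition.transpose i j k) = t ! k" for k
      using eq by (auto simp: Transposition.transpose_def)
    then show "conv r (PF \<rho> n t is (Transposition.transpose i j \<circ> f)) \<tau> = conv r (PF \<rho> n t is f) \<tau>"
      unfolding PF_def by simp
  qed (use ij in auto)
  then show ?thesis unfolding P_tuple_conv by simp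
qed

lemma P_perm_is:
  assumes len: "length is = r" and g: "g permutes {..<r}"
  shows "P_tuple \<rho> n r t (map (\<lambda>j. is ! g j) [0..<r]) \<tau> = of_int (sign g) * P_tuple \<rho> n r t is \<tau>"
proof -
  note pg = perm_facts[OF g]
  let ?is = "map (\<lambda>j. is ! g j) [0..<r]"
  have c: "conv r (PF \<rho> n t ?is f) \<tau> = conv r (PF \<rho> n t is (f \<circ> Hilbert_Choice.inv g)) \<tau>" for f
  proof -
    have "conv r (PF \<rho> n t ?is f) \<tau> = conv r (\<lambda>j. PF \<rho> n t is (f \<circ> Hilbert_Choice.inv g) (g j)) \<tau>"
      by (rule conv_cong) (simp add: PF_def pg)
    also have "\<dots> = conv r (PF \<rho> n t is (f \<circ> Hilbert_Choice.inv g)) \<tau>"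
      by (rule conv_perm[OF g])
    finally show ?thesis .
  qed
  have "(\<Sum>f | f permutes {..<r}. of_int (sign f) * conv r (PF \<rho> n t ?is f) \<tau>) =
        (\<Sum>f | f permutes {..<r}. of_int (sign f) * conv r (PF \<rho> n t is (f \<circ> Hilbert_Choice.inv g)) \<tau>)"
    by (simp add: c)
  also have "\<dots> = (\<Sum>h | h permutes {..<r}. of_int (sign (h \<circ> g)) * conv r (PF \<rho> n t is h) \<tau>)"
  proof (rule sum.reindex_bij_witness[where i="\<lambda>h. h \<circ> g" and j="\<lambda>f. f \<circ> Hilbert_Choice.inv g"])
    fix f assume "f \<in> {f. f permutes {..<r}}"
    then show "f \<circ> Hilbert_Choice.inv g \<circ> g = f" "f \<circ> Hilbert_Choice.inv g \<in> {f. f permutes {..<r}}"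
      using g permutes_compose[OF permutes_inv[OF g], of f] by (auto simp: comp_def pg)
  next
    fix h assume "h \<in> {f. f permutes {..<r}}"
    then show "h \<circ> g \<circ> Hilbert_Choice.inv g = h" "h \<circ> g \<in> {f. f permutes {..<r}}"
      using g permutes_compose[OF g, of h] by (auto simp: comp_def pg)
  qed (simp add: comp_def pg)
  also have "\<dots> = of_int (sign g) * (\<Sum>h | h permutes {..<r}. of_int (sign h) * conv r (PF \<rho> n t is h) \<tau>)"
    by (simp add: sum_distrib_left sign_compose[OF perm_permutation perm_permutation[OF g]] algebra_simps)
  finally show ?thesis unfolding P_tuple_conv using len by simp
qed

lemma P_cact:
  assumes R: "is_lattice_rep n \<rho>" and t: "t \<in> tuples n r" and r: "r \<ge> 1"
  shows "c_act \<rho> n \<sigma> (P_tuple \<rho> n r t) = g_act \<sigma> (P_tuple \<rho> n r t)"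
proof (intro ext)
  fix "is" \<tau>
  show "c_act \<rho> n \<sigma> (P_tuple \<rho> n r t) is \<tau> = g_act \<sigma> (P_tuple \<rho> n r t) is \<tau>"
  proof (cases "is")
    case Nil then show ?thesis using r unfolding c_act_def g_act_def P_tuple_conv by simp
  next
    case (Cons i rest)
    show ?thesis
    proof (cases "i < n \<and> length is = r")
      case False
      then have "\<not> i < n \<or> \<not> length is = r" by auto
      then show ?thesis
      proof
        assume "\<not> i < n"
        then have "conv r (PF \<rho> n t is f) (\<tau> - \<sigma>) = 0" for f
          using r Cons by (intro conv_zero_factor[of 0]) (auto simp: PF_def)
        then show ?thesis using \<open>\<not> i < n\<close> Cons unfolding c_act_def g_act_def P_tuple_conv by simp
      next
        assume "\<not> length is = r"
        then show ?thesis using Cons unfolding c_act_def g_act_def P_tuple_conv by simp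
      qed
    next
      case True
      then have i: "i < n" and len: "length is = r" by auto
      have "conv r (PF \<rho> n t is f) (\<tau> - \<sigma>) = (\<Sum>j<n. of_int (\<rho> \<sigma> i j) * conv r (PF \<rho> n t (j # rest) f) \<tau>)"
        if f: "f permutes {..<r}" for f
      proof -
        let ?F = "PF \<rho> n t is f"
        let ?v = "t ! f 0"
        define G where "G = (\<lambda>j x. (of_int (act \<rho> n (- x) ?v j)::rat))"
        have v: "?v \<in> lat n" using tuples_nth[OF t] perm_facts(3)[OF f] r by auto
        have "(\<Sum>j<n. of_int (\<rho> \<sigma> i j) * conv r (PF \<rho> n t (j # rest) f) \<tau>) =
            (\<Sum>j<n. of_int (\<rho> \<sigma> i j) * conv r (?F(0 := G j)) \<tau>)"
          by (intro sum.cong refl arg_cong[where f="\<lambda>x. _ * x"] conv_cong)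
             (auto simp: PF_def G_def Cons nth_Cons')
        also have "\<dots> = conv r (?F(0 := \<lambda>x. \<Sum>j<n. of_int (\<rho> \<sigma> i j) * G j x)) \<tau>"
          using r by (intro conv_lin[symmetric]) auto
        also have "(\<lambda>x. \<Sum>j<n. of_int (\<rho> \<sigma> i j) * G j x) = (\<lambda>x. ?F 0 (x - \<sigma>))"
        proof
          fix x
          have "(\<Sum>j<n. of_int (\<rho> \<sigma> i j) * G j x) = of_int (\<Sum>j<n. \<rho> \<sigma> i j * act \<rho> n (- x) ?v j)"
            unfolding G_def by simp
          also have "\<dots> = of_int (act \<rho> n \<sigma> (act \<rho> n (- x) ?v) i)"
            using i by (simp add: act_expand)
          also have "\<dots> = of_int (act \<rho> n (\<sigma> + - x) ?v i)"
            using act_comp[OF R v] by simp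
          finally show "(\<Sum>j<n. of_int (\<rho> \<sigma> i j) * G j x) = ?F 0 (x - \<sigma>)"
            by (simp add: PF_def Cons algebra_simps)
        qed
        also have "conv r (?F(0 := \<lambda>x. ?F 0 (x - \<sigma>))) \<tau> = conv r (?F(0 := ?F 0)) (\<tau> - \<sigma>)"
          using r by (intro conv_shift) auto
        finally show ?thesis by simp
      qed
      then have "P_tuple \<rho> n r t is (\<tau> - \<sigma>) = (\<Sum>j<n. of_int (\<rho> \<sigma> i j) * P_tuple \<rho> n r t (j # rest) \<tau>)"
        unfolding P_tuple_conv using len Cons
        by (simp add: sum_distrib_left sum.swap[where A="{..<n}"] algebra_simps)
      then show ?thesis using Cons i unfolding c_act_def g_act_def by simp
    qed
  qed
qed


definition fadd :: "('a \<Rightarrow> rat) \<Rightarrow> ('a \<Rightarrow> rat) \<Rightarrow> ('a \<Rightarrow> rat)" (infixl "\<oplus>" 65) where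
  "fadd x y = (\<lambda>u. x u + y u)"
definition fsub :: "('a \<Rightarrow> rat) \<Rightarrow> ('a \<Rightarrow> rat) \<Rightarrow> ('a \<Rightarrow> rat)" (infixl "\<ominus>" 65) where
  "fsub x y = (\<lambda>u. x u - y u)"
definition fsum :: "'b set \<Rightarrow> ('b \<Rightarrow> 'a \<Rightarrow> rat) \<Rightarrow> ('a \<Rightarrow> rat)" where
  "fsum K f = (\<lambda>u. \<Sum>k\<in>K. f k u)"
lemma fadd_apply[simp]: "(x \<oplus> y) u = x u + y u" by (simp add: fadd_def)
lemma fsub_apply[simp]: "(x \<ominus> y) u = x u - y u" by (simp add: fsub_def)
lemma fsum_apply[simp]: "fsum K f u = (\<Sum>k\<in>K. f k u)" by (simp add: fsum_def)

definition sc :: "rat \<Rightarrow> ('a \<Rightarrow> rat) \<Rightarrow> ('a \<Rightarrow> rat)" where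
  "sc c x = (\<lambda>u. c * x u)"

lemma sc_apply[simp]: "sc c x u = c * x u" by (simp add: sc_def)

definition ev :: "nat \<Rightarrow> nat \<Rightarrow> int" where "ev k = (\<lambda>l. if l = k then 1 else 0)"

lemma ev_lat: "k < n \<Longrightarrow> ev k \<in> lat n" unfolding ev_def lat_def by auto

lemma lat_expand: "v \<in> lat n \<Longrightarrow> v = (\<lambda>l. \<Sum>k\<in>{..<n}. v k * ev k l)"
proof
  fix l assume v: "v \<in> lat n"
  have "(\<Sum>k\<in>{..<n}. v k * ev k l) = (\<Sum>k\<in>{..<n}. if k = l then v k else 0)"
    unfolding ev_def by (intro sum.cong) auto
  also have "\<dots> = (if l < n then v l else 0)" by (simp add: sum.delta)
  finally show "v l = (\<Sum>k\<in>{..<n}. v k * ev k l)" using v unfolding lat_def by auto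
qed

definition idx :: "nat \<Rightarrow> nat \<Rightarrow> nat list set" where
  "idx n m = {is. length is = m \<and> set is \<subseteq> {..<n}}"

lemma finite_idx[simp]: "finite (idx n m)"
  unfolding idx_def using finite_lists_length_eq[of "{..<n}" m] by (simp add: conj_commute)

lemma idx_0: "idx n 0 = {[]}" unfolding idx_def by auto

lemma idx_Suc: "idx n (Suc m) = (\<lambda>(is,k). is @ [k]) ` (idx n m \<times> {..<n})"
proof (rule equalityI; rule subsetI)
  fix x assume x: "x \<in> idx n (Suc m)"
  then obtain ys y where "x = ys @ [y]" unfolding idx_def by (cases x rule: rev_exhaust) auto
  with x show "x \<in> (\<lambda>(is,k). is @ [k]) ` (idx n m \<times> {..<n})" unfolding idx_def by auto
qed (auto simp: idx_def)

lemma inj_idx_Suc: "inj_on (\<lambda>(is,k). is @ [k]) (idx n m \<times> {..<n})"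
  by (auto intro!: inj_onI)

lemma sum_idx_Suc: "(\<Sum>is\<in>idx n (Suc m). h is) = (\<Sum>is\<in>idx n m. \<Sum>k<n. h (is @ [k]))"
  unfolding idx_Suc by (subst sum.reindex[OF inj_idx_Suc]) (simp add: sum.cartesian_product split_def)

lemma idx_nth: "is \<in> idx n m \<Longrightarrow> j < m \<Longrightarrow> is ! j < n"
  unfolding idx_def using nth_mem by fastforce

lemma idx_len: "is \<in> idx n m \<Longrightarrow> length is = m"
  unfolding idx_def by auto

context fixes \<rho> :: "'g::{ab_group_add,finite} \<Rightarrow> nat \<Rightarrow> nat \<Rightarrow> int" and n r :: nat
begin

abbreviation "S \<equiv> rel_span \<rho> n r"

lemma S_zero: "(\<lambda>_. 0) \<in> S" by (rule rel_span.zero)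

lemma S_add: "x \<in> S \<Longrightarrow> y \<in> S \<Longrightarrow> x \<oplus> y \<in> S"
  using rel_span.add[of x \<rho> n r y] by (simp add: fadd_def)

lemma S_sc: "x \<in> S \<Longrightarrow> sc c x \<in> S"
  using rel_span.smult[of x \<rho> n r c] by (simp add: sc_def)

lemma S_diff: "x \<in> S \<Longrightarrow> y \<in> S \<Longrightarrow> x \<ominus> y \<in> S"
  using S_add[OF _ S_sc[of y "-1"]] by (simp add: fadd_def fsub_def)

lemma S_sum: "finite K \<Longrightarrow> (\<And>k. k \<in> K \<Longrightarrow> f k \<in> S) \<Longrightarrow> fsum K f \<in> S"
proof (induction K rule: finite_induct)
  case empty then show ?case using S_zero by (simp add: fsum_def)
next
  case (insert a K)
  have "fsum K f \<in> S" using insert.IH insert.prems by blast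
  moreover have "f a \<in> S" using insert.prems by blast
  ultimately have "f a \<oplus> fsum K f \<in> S" by (rule S_add[rotated])
  then show ?case using insert by (simp add: fsum_def fadd_def)
qed

lemma S_cong: "x \<in> S \<Longrightarrow> (\<And>u. x u = y u) \<Longrightarrow> y \<in> S"
  proof - assume "x \<in> S" "\<And>u. x u = y u" then have "x = y" by (simp add: fun_eq_iff) with \<open>x \<in> S\<close> show ?thesis by simp qed

lemma S_gen1: "t \<in> tuples n r \<Longrightarrow> i < r \<Longrightarrow> a \<in> lat n \<Longrightarrow> b \<in> lat n \<Longrightarrow>
   delta (t[i := (\<lambda>k. a k + b k)]) \<ominus> delta (t[i := a]) \<ominus> delta (t[i := b]) \<in> S"
proof -
  assume a: "t \<in> tuples n r" "i < r" "a \<in> lat n" "b \<in> lat n"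
  have "(\<lambda>u. delta (t[i := (\<lambda>k. a k + b k)]) u - delta (t[i := a]) u - delta (t[i := b]) u) \<in> rel_gens \<rho> n r"
    unfolding rel_gens_def using a by blast
  then show ?thesis by (simp add: fsub_def rel_span.gen)
qed

lemma S_gen2: "t \<in> tuples n r \<Longrightarrow> i < r \<Longrightarrow> j < r \<Longrightarrow>
   delta (t[i := act \<rho> n \<sigma> (t ! i)]) \<ominus> delta (t[j := act \<rho> n \<sigma> (t ! j)]) \<in> S"
proof -
  assume a: "t \<in> tuples n r" "i < r" "j < r"
  have "(\<lambda>u. delta (t[i := act \<rho> n \<sigma> (t ! i)]) u - delta (t[j := act \<rho> n \<sigma> (t ! j)]) u) \<in> rel_gens \<rho> n r"
    unfolding rel_gens_def using a by blast
  then show ?thesis by (simp add: fsub_def rel_span.gen)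
qed

lemma S_gen3: "t \<in> tuples n r \<Longrightarrow> i < j \<Longrightarrow> j < r \<Longrightarrow> t ! i = t ! j \<Longrightarrow> delta t \<in> S"
  by (rule rel_span.gen, unfold rel_gens_def) blast

lemma tuples_upd: "t \<in> tuples n r \<Longrightarrow> v \<in> lat n \<Longrightarrow> t[i := v] \<in> tuples n r"
  unfolding tuples_def by (auto dest: set_update_subset_insert[THEN subsetD])

lemma zero_lat[simp]: "(\<lambda>k. 0) \<in> lat n" unfolding lat_def by simp

lemma S_zero_slot: "t \<in> tuples n r \<Longrightarrow> i < r \<Longrightarrow> delta (t[i := (\<lambda>k. 0)]) \<in> S"
  by (rule S_cong[OF S_sc[OF S_gen1[of t i "\<lambda>k. 0" "\<lambda>k. 0"], of "-1"]]) auto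

definition eqv :: "((nat \<Rightarrow> int) list \<Rightarrow> rat) \<Rightarrow> ((nat \<Rightarrow> int) list \<Rightarrow> rat) \<Rightarrow> bool" where
  "eqv x y \<longleftrightarrow> x \<ominus> y \<in> S"

lemma eqv_refl: "eqv x x"
  unfolding eqv_def by (rule S_cong[OF S_zero]) simp

lemma eqv_ext: "(\<And>u. x u = y u) \<Longrightarrow> eqv x y"
  unfolding eqv_def by (rule S_cong[OF S_zero]) simp

lemma eqv_sym: assumes a: "eqv x y" shows "eqv y x"
  using a unfolding eqv_def by - (rule S_cong[OF S_sc[OF a[unfolded eqv_def], of "-1"]], simp)

lemma eqv_trans: assumes a: "eqv x y" and b: "eqv y z" shows "eqv x z"
  unfolding eqv_def by (rule S_cong[OF S_add[OF a[unfolded eqv_def] b[unfolded eqv_def]]]) simp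

declare eqv_trans[trans]

lemma eqv_add: assumes a: "eqv x1 y1" and b: "eqv x2 y2" shows "eqv (x1 \<oplus> x2) (y1 \<oplus> y2)"
  unfolding eqv_def by (rule S_cong[OF S_add[OF a[unfolded eqv_def] b[unfolded eqv_def]]]) simp

lemma eqv_sub: assumes a: "eqv x1 y1" and b: "eqv x2 y2" shows "eqv (x1 \<ominus> x2) (y1 \<ominus> y2)"
  unfolding eqv_def by (rule S_cong[OF S_diff[OF a[unfolded eqv_def] b[unfolded eqv_def]]]) simp

lemma eqv_sc: assumes a: "eqv x y" shows "eqv (sc c x) (sc c y)"
  unfolding eqv_def by (rule S_cong[OF S_sc[OF a[unfolded eqv_def], of c]]) (simp add: algebra_simps)

lemma eqv_fsum: "finite K \<Longrightarrow> (\<And>k. k \<in> K \<Longrightarrow> eqv (f k) (g k)) \<Longrightarrow> eqv (fsum K f) (fsum K g)"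
  unfolding eqv_def by (rule S_cong[OF S_sum[of K "\<lambda>k. f k \<ominus> g k"]]) (auto simp: sum_subtractf)

lemma eqv_zero_iff: "eqv x (\<lambda>_. 0) \<longleftrightarrow> x \<in> S"
  unfolding eqv_def fsub_def by simp

lemma eqv_S: assumes a: "eqv x y" and b: "y \<in> S" shows "x \<in> S"
  by (rule S_cong[OF S_add[OF a[unfolded eqv_def] b]]) simp

lemma lat_add: "a \<in> lat n \<Longrightarrow> b \<in> lat n \<Longrightarrow> (\<lambda>k. a k + b k) \<in> lat n"
  unfolding lat_def by auto
lemma lat_smult: "a \<in> lat n \<Longrightarrow> (\<lambda>k. c * a k) \<in> lat n"
  unfolding lat_def by auto
lemma lat_sum: "(\<And>m. m \<in> K \<Longrightarrow> a m \<in> lat n) \<Longrightarrow> (\<lambda>l. \<Sum>m\<in>K. c m * a m l) \<in> lat n"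
  unfolding lat_def by auto

lemma eqv_gen1: "t \<in> tuples n r \<Longrightarrow> i < r \<Longrightarrow> a \<in> lat n \<Longrightarrow> b \<in> lat n \<Longrightarrow>
   eqv (delta (t[i := (\<lambda>k. a k + b k)])) (delta (t[i := a]) \<oplus> delta (t[i := b]))"
  unfolding eqv_def by (rule S_cong[OF S_gen1[of t i a b]]) auto

lemma eqv_nat:
  assumes t: "t \<in> tuples n r" and i: "i < r" and a: "a \<in> lat n"
  shows "eqv (delta (t[i := (\<lambda>k. int c * a k)])) (sc (of_nat c) (delta (t[i := a])))"
proof (induction c)
  case 0
  show ?case using S_zero_slot[OF t i] by (simp add: eqv_def fsub_def sc_def)
next
  case (Suc c)
  have "eqv (delta (t[i := (\<lambda>k. int (Suc c) * a k)])) (delta (t[i := (\<lambda>k. int c * a k)]) \<oplus> delta (t[i := a]))"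
    using eqv_gen1[OF t i lat_smult[OF a, of "int c"] a] by (simp add: algebra_simps)
  also have "eqv \<dots> (sc (of_nat c) (delta (t[i := a])) \<oplus> delta (t[i := a]))"
    by (rule eqv_add[OF Suc eqv_refl])
  also have "eqv \<dots> (sc (of_nat (Suc c)) (delta (t[i := a])))"
    by (rule eqv_ext) (simp add: algebra_simps)
  finally show ?case .
qed

lemma eqv_int:
  assumes t: "t \<in> tuples n r" and i: "i < r" and a: "a \<in> lat n"
  shows "eqv (delta (t[i := (\<lambda>k. c * a k)])) (sc (of_int c) (delta (t[i := a])))"
proof (cases "c \<ge> 0")
  case True
  then obtain m where "c = int m" by (metis nonneg_eq_int)
  then show ?thesis using eqv_nat[OF t i a, of m] by simp
next
  case False
  obtain m where c: "c = - int m" using False by (intro that[of "nat (-c)"]) simp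
  let ?x = "delta (t[i := (\<lambda>k. - int m * a k)])" and ?y = "delta (t[i := (\<lambda>k. int m * a k)])"
  have A: "delta (t[i := (\<lambda>k. 0)]) \<ominus> (?x \<oplus> ?y) \<in> S"
    using eqv_gen1[OF t i lat_smult[OF a] lat_smult[OF a], of "- int m" "int m", unfolded eqv_def]
    by simp
  have B: "delta (t[i := (\<lambda>k. 0)]) \<in> S" by (rule S_zero_slot[OF t i])
  have C: "?y \<ominus> sc (of_nat m) (delta (t[i := a])) \<in> S" using eqv_nat[OF t i a, of m] by (simp add: eqv_def)
  show ?thesis unfolding eqv_def c
    by (rule S_cong[OF S_diff[OF S_diff[OF B A] C]]) simp
qed

lemma eqv_sumv:
  assumes t: "t \<in> tuples n r" and i: "i < r" and K: "finite K" and a: "\<And>m. m \<in> K \<Longrightarrow> a m \<in> lat n"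
  shows "eqv (delta (t[i := (\<lambda>l. \<Sum>m\<in>K. c m * a m l)])) (fsum K (\<lambda>m. sc (of_int (c m)) (delta (t[i := a m]))))"
  using K a
proof (induction K rule: finite_induct)
  case empty
  show ?case using S_zero_slot[OF t i] by (simp add: eqv_def fsub_def fsum_def)
next
  case (insert m K)
  have "eqv (delta (t[i := (\<lambda>l. \<Sum>m\<in>insert m K. c m * a m l)]))
      (delta (t[i := (\<lambda>l. c m * a m l)]) \<oplus> delta (t[i := (\<lambda>l. \<Sum>m\<in>K. c m * a m l)]))"
    using eqv_gen1[OF t i lat_smult[OF insert.prems[of m]] lat_sum[of K a c], of "c m"] insert by simp
  also have "eqv \<dots> (sc (of_int (c m)) (delta (t[i := a m])) \<oplus> fsum K (\<lambda>m. sc (of_int (c m)) (delta (t[i := a m]))))"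
  proof (rule eqv_add)
    show "eqv (delta (t[i := (\<lambda>l. c m * a m l)])) (sc (of_int (c m)) (delta (t[i := a m])))"
      using insert.prems by (intro eqv_int[OF t i]) auto
    show "eqv (delta (t[i := (\<lambda>l. \<Sum>m\<in>K. c m * a m l)])) (fsum K (\<lambda>m. sc (of_int (c m)) (delta (t[i := a m]))))"
      using insert.prems by (intro insert.IH) auto
  qed
  also have "eqv \<dots> (fsum (insert m K) (\<lambda>m. sc (of_int (c m)) (delta (t[i := a m]))))"
    using insert by (intro eqv_ext) simp
  finally show ?case .
qed

lemma eqv_exp1:
  assumes t: "t \<in> tuples n r" and i: "i < r" and v: "v \<in> lat n"
  shows "eqv (delta (t[i := v])) (fsum {..<n} (\<lambda>k. sc (of_int (v k)) (delta (t[i := ev k]))))"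
  using eqv_sumv[OF t i, of "{..<n}" ev v] lat_expand[OF v] ev_lat by auto

lemma eqv_expand_m:
  assumes t: "t \<in> tuples n r" and m: "m \<le> r"
  shows "eqv (delta t) (fsum (idx n m) (\<lambda>is. sc (\<Prod>j<m. of_int ((t ! j) (is ! j))) (delta (map ev is @ drop m t))))"
  using m
proof (induction m)
  case 0
  show ?case by (rule eqv_ext) (simp add: idx_0)
next
  case (Suc m)
  then have m: "m < r" by simp
  have lt: "length t = r" using t by (rule tuples_len)
  let ?p = "\<lambda>is. (\<Prod>j<m. of_int ((t ! j) (is ! j))::rat)"
  have IH: "eqv (delta t) (fsum (idx n m) (\<lambda>is. sc (?p is) (delta (map ev is @ drop m t))))"
    by (rule Suc.IH) (use m in simp)
  have step: "eqv (delta (map ev is @ drop m t))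
      (fsum {..<n} (\<lambda>k. sc (of_int ((t ! m) k)) (delta (map ev (is @ [k]) @ drop (Suc m) t))))"
    if "is": "is \<in> idx n m" for "is"
  proof -
    let ?u = "map ev is @ drop m t"
    have dr: "drop m t = t ! m # drop (Suc m) t" using m lt by (simp add: Cons_nth_drop_Suc)
    have u: "?u \<in> tuples n r" using "is" t m lt unfolding tuples_def idx_def
      by (auto simp: ev_lat dest: in_set_dropD)
    have um: "?u ! m = t ! m" using "is" dr by (simp add: idx_len nth_append)
    have uk: "?u[m := ev k] = map ev (is @ [k]) @ drop (Suc m) t" for k
      using "is" dr by (simp add: idx_len list_update_append)
    have vl: "?u ! m \<in> lat n" using um tuples_nth[OF t m] by simp
    show ?thesis using eqv_exp1[OF u m vl, unfolded list_update_id] unfolding um uk .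
  qed
  note IH
  also have "eqv (fsum (idx n m) (\<lambda>is. sc (?p is) (delta (map ev is @ drop m t))))
     (fsum (idx n m) (\<lambda>is. sc (?p is) (fsum {..<n} (\<lambda>k. sc (of_int ((t ! m) k)) (delta (map ev (is @ [k]) @ drop (Suc m) t))))))"
    by (intro eqv_fsum eqv_sc step) auto
  also have "eqv \<dots> (fsum (idx n (Suc m)) (\<lambda>is. sc (\<Prod>j<Suc m. of_int ((t ! j) (is ! j))) (delta (map ev is @ drop (Suc m) t))))"
  proof (rule eqv_ext)
    fix w
    have eq: "?p is * (\<Sum>k<n. of_int ((t ! m) k) * delta (map ev (is @ [k]) @ drop (Suc m) t) w) =
         (\<Sum>k<n. (\<Prod>j<Suc m. of_int ((t ! j) ((is @ [k]) ! j))) * delta (map ev (is @ [k]) @ drop (Suc m) t) w)"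
      if "is": "is \<in> idx n m" for "is"
    proof -
      have "(\<Prod>j<Suc m. of_int ((t ! j) ((is @ [k]) ! j))::rat) = ?p is * of_int ((t ! m) k)" for k
        using "is" by (simp add: prod.lessThan_Suc idx_len nth_append)
      then show ?thesis by (simp add: sum_distrib_left mult.assoc)
    qed
    show "fsum (idx n m) (\<lambda>is. sc (?p is) (fsum {..<n} (\<lambda>k. sc (of_int ((t ! m) k)) (delta (map ev (is @ [k]) @ drop (Suc m) t))))) w =
      fsum (idx n (Suc m)) (\<lambda>is. sc (\<Prod>j<Suc m. of_int ((t ! j) (is ! j))) (delta (map ev is @ drop (Suc m) t))) w"
      unfolding fsum_apply sc_apply sum_idx_Suc using eq by (intro sum.cong) auto
  qed
  finally show ?case .
qed

lemma eqv_expand: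
  assumes t: "t \<in> tuples n r"
  shows "eqv (delta t) (fsum (idx n r) (\<lambda>is. sc (\<Prod>j<r. of_int ((t ! j) (is ! j))) (delta (map ev is))))"
  using eqv_expand_m[OF t order.refl] tuples_len[OF t] by simp

lemma eqv_bal:
  assumes R: "is_lattice_rep n \<rho>" and t: "t \<in> tuples n r" and r: "r \<ge> 1"
  shows "eqv (delta (map (\<lambda>j. act \<rho> n (a j) (t ! j)) [0..<r])) (delta (t[0 := act \<rho> n (\<Sum>j<r. a j) (t ! 0)]))"
proof -
  have lt: "length t = r" using t by (rule tuples_len)
  define W where "W m = map (\<lambda>j. if j = 0 then act \<rho> n (\<Sum>l<m. a l) (t ! 0) else if j < m then t ! j else act \<rho> n (a j) (t ! j)) [0..<r]" for m
  have W1: "W 1 = map (\<lambda>j. act \<rho> n (a j) (t ! j)) [0..<r]"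
    unfolding W_def by (intro map_cong) auto
  have Wr: "W r = t[0 := act \<rho> n (\<Sum>j<r. a j) (t ! 0)]"
    unfolding W_def using lt r by (intro nth_equalityI) auto
  have Wt: "W m \<in> tuples n r" for m
    unfolding W_def tuples_def using tuples_nth[OF t] by auto
  have step: "eqv (delta (W m)) (delta (W (Suc m)))" if m: "1 \<le> m" "m < r" for m
  proof -
    define W' where "W' = (W m)[m := t ! m]"
    have W't: "W' \<in> tuples n r" unfolding W'_def by (rule tuples_upd[OF Wt tuples_nth[OF t m(2)]])
    have "W' ! m = t ! m" "W' ! 0 = act \<rho> n (\<Sum>l<m. a l) (t ! 0)"
      unfolding W'_def W_def using m by auto
    have e1: "W m = W'[m := act \<rho> n (a m) (W' ! m)]"
      unfolding W'_def W_def using m by (intro nth_equalityI) (auto simp: nth_list_update)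
    have e2: "W (Suc m) = W'[0 := act \<rho> n (a m) (W' ! 0)]"
    proof -
      have "act \<rho> n (a m) (act \<rho> n (\<Sum>l<m. a l) (t ! 0)) = act \<rho> n (\<Sum>l<Suc m. a l) (t ! 0)"
        using act_comp[OF R tuples_nth[OF t], of 0 "a m" "\<Sum>l<m. a l"] r by (simp add: add.commute)
      then show ?thesis
        unfolding W'_def W_def using m by (intro nth_equalityI) (auto simp: nth_list_update)
    qed
    show ?thesis unfolding e1 e2 eqv_def using S_gen2[OF W't m(2), of 0 "a m"] r by simp
  qed
  have "eqv (delta (W 1)) (delta (W m))" if "1 \<le> m" "m \<le> r" for m
    using that
  proof (induction m rule: nat_induct_at_least)
    case base show ?case by (rule eqv_refl)
  next
    case (Suc m)
    then show ?case using step[of m] eqv_trans by simp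
  qed
  from this[of r] r show ?thesis unfolding W1 Wr by simp
qed

lemma eqv_swap:
  assumes t: "t \<in> tuples n r" and ab: "a < b" "b < r"
  shows "eqv (delta (t[a := t ! b, b := t ! a])) (sc (-1) (delta t))"
proof -
  have lt: "length t = r" using t by (rule tuples_len)
  let ?x = "t ! a" and ?y = "t ! b"
  let ?s = "\<lambda>k. ?x k + ?y k"
  have xl: "?x \<in> lat n" and yl: "?y \<in> lat n" using tuples_nth[OF t] ab by auto
  have sl: "?s \<in> lat n" by (rule lat_add[OF xl yl])
  let ?u = "t[a := ?s, b := ?s]"
  have ut: "?u \<in> tuples n r" using tuples_upd[OF tuples_upd[OF t sl] sl] .
  have Zu: "delta ?u \<in> S" using ab lt by (intro S_gen3[OF ut ab]) auto
  have E1: "delta (?u[a := ?s]) \<ominus> (delta (?u[a := ?x]) \<oplus> delta (?u[a := ?y])) \<in> S"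
    using eqv_gen1[OF ut _ xl yl, of a] ab unfolding eqv_def by simp
  have uat: "?u[a := ?x] \<in> tuples n r" and ubt: "?u[a := ?y] \<in> tuples n r"
    using tuples_upd[OF ut xl] tuples_upd[OF ut yl] .
  have E2: "delta (?u[a := ?x, b := ?s]) \<ominus> (delta (?u[a := ?x, b := ?x]) \<oplus> delta (?u[a := ?x, b := ?y])) \<in> S"
    using eqv_gen1[OF uat _ xl yl, of b] ab unfolding eqv_def by simp
  have E3: "delta (?u[a := ?y, b := ?s]) \<ominus> (delta (?u[a := ?y, b := ?x]) \<oplus> delta (?u[a := ?y, b := ?y])) \<in> S"
    using eqv_gen1[OF ubt _ xl yl, of b] ab unfolding eqv_def by simp
  have Zaa: "delta (?u[a := ?x, b := ?x]) \<in> S"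
    using ab lt by (intro S_gen3[OF tuples_upd[OF uat xl] ab]) auto
  have Zbb: "delta (?u[a := ?y, b := ?y]) \<in> S"
    using ab lt by (intro S_gen3[OF tuples_upd[OF ubt yl] ab]) auto
  have l1: "?u[a := ?s] = ?u" using ab lt by (simp add: list_update_swap)
  have l2: "?u[a := ?x, b := ?s] = ?u[a := ?x]" using ab lt by (simp add: list_update_swap)
  have l3: "?u[a := ?y, b := ?s] = ?u[a := ?y]" using ab lt by (simp add: list_update_swap)
  have l4: "?u[a := ?x, b := ?y] = t" using ab lt by (simp add: list_update_swap)
  have l5: "?u[a := ?y, b := ?x] = t[a := t ! b, b := t ! a]" using ab lt by (simp add: list_update_swap)
  note E = E1[unfolded l1] E2[unfolded l2 l4] E3[unfolded l3 l5]
  have X: "sc (-1) (delta ?u \<ominus> (delta (?u[a := ?x]) \<oplus> delta (?u[a := ?y])))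
     \<oplus> sc (-1) (delta (?u[a := ?x]) \<ominus> (delta (?u[a := ?x, b := ?x]) \<oplus> delta t))
     \<oplus> sc (-1) (delta (?u[a := ?y]) \<ominus> (delta (t[a := t ! b, b := t ! a]) \<oplus> delta (?u[a := ?y, b := ?y])))
     \<oplus> delta ?u \<ominus> delta (?u[a := ?x, b := ?x]) \<ominus> delta (?u[a := ?y, b := ?y]) \<in> S"
    by (intro S_add S_diff S_sc E Zu Zaa Zbb)
  show ?thesis unfolding eqv_def by (rule S_cong[OF X]) (simp add: algebra_simps)
qed

lemma eqv_swap': 
  assumes t: "t \<in> tuples n r" and ab: "a < r" "b < r" "a \<noteq> b"
  shows "eqv (delta (t[a := t ! b, b := t ! a])) (sc (-1) (delta t))"
proof (cases "a < b")
  case True show ?thesis by (rule eqv_swap[OF t True ab(2)])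
next
  case False
  then have "b < a" using ab by simp
  moreover have "t[a := t ! b, b := t ! a] = t[b := t ! a, a := t ! b]" using ab by (simp add: list_update_swap)
  ultimately show ?thesis using eqv_swap[OF t _ ab(1), of b] by simp
qed

lemma eqv_perm:
  assumes f: "f permutes {..<r}"
  shows "\<forall>t\<in>tuples n r. eqv (delta (map (\<lambda>j. t ! f j) [0..<r])) (sc (of_int (sign f)) (delta t))"
  using f finite_lessThan[of r]
proof (induction f rule: permutes_induct)
  case id
  show ?case
  proof
    fix t assume t: "t \<in> tuples n r"
    have "map (\<lambda>j. t ! id j) [0..<r] = t" using tuples_len[OF t] map_nth[of t] by simp
    then show "eqv (delta (map (\<lambda>j. t ! id j) [0..<r])) (sc (of_int (sign id)) (delta t))"
      by (simp add: eqv_ext)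
  qed
next
  case (swap a b p)
  show ?case
  proof
    fix t assume t: "t \<in> tuples n r"
    have lt: "length t = r" using t by (rule tuples_len)
    have pp: "p permutes {..<r}" using swap(4) by simp
    let ?t' = "t[a := t ! b, b := t ! a]"
    have t't: "?t' \<in> tuples n r" using swap(1,2) by (intro tuples_upd t tuples_nth[OF t]) auto
    have m: "map (\<lambda>j. t ! (Transposition.transpose a b \<circ> p) j) [0..<r] = map (\<lambda>j. ?t' ! p j) [0..<r]"
    proof (rule map_cong[OF refl])
      fix j assume "j \<in> set [0..<r]"
      then have "p j < r" using perm_facts(3)[OF pp] by simp
      then show "t ! (Transposition.transpose a b \<circ> p) j = ?t' ! p j"
        using swap(1,2,3) lt by (auto simp: Transposition.transpose_def nth_list_update)
    qed
    have "eqv (delta (map (\<lambda>j. ?t' ! p j) [0..<r])) (sc (of_int (sign p)) (delta ?t'))"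
      using swap.IH t't by blast
    also have "eqv \<dots> (sc (of_int (sign p)) (sc (-1) (delta t)))"
      by (rule eqv_sc[OF eqv_swap'[OF t]]) (use swap in auto)
    also have "eqv \<dots> (sc (of_int (sign (Transposition.transpose a b \<circ> p))) (delta t))"
      using swap(3) by (intro eqv_ext) (simp add: sign_compose[OF permutation_swap_id perm_permutation[OF pp]] sign_swap_id)
    finally show "eqv (delta (map (\<lambda>j. t ! (Transposition.transpose a b \<circ> p) j) [0..<r])) (sc (of_int (sign (Transposition.transpose a b \<circ> p))) (delta t))"
      unfolding m .
  qed
qed

end


definition piv :: "nat \<Rightarrow> nat \<Rightarrow> (nat list \<Rightarrow> rat) \<Rightarrow> ((nat \<Rightarrow> int) list \<Rightarrow> rat)" where
  "piv n r T = fsum (idx n r) (\<lambda>is. sc (T is) (delta (map ev is)))"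

definition cc :: "nat \<Rightarrow> 'g itself \<Rightarrow> rat" where
  "cc r (_::'g itself) = of_nat (fact r * card (UNIV::'g set) ^ (r - 1))"

lemma card_Sset:
  assumes "r \<ge> 1"
  shows "card (Sset r (\<tau>::'g::{ab_group_add,finite})) = card (UNIV::'g set) ^ (r - 1)"
proof -
  have "of_nat (card (Sset r \<tau>)) = (conv r (\<lambda>_ _. 1) \<tau> :: int)"
    unfolding conv_def by simp
  also have "\<dots> = of_nat (card (UNIV::'g set)) ^ (r - 1)" by (rule conv_one[OF assms])
  finally show ?thesis by (metis of_nat_eq_iff of_nat_power)
qed

lemma card_perms: "card {f. f permutes {..<(r::nat)}} = fact r"
  by (rule card_permutations) auto

lemma P_tuple_Sset:
  "P_tuple \<rho> n r t is \<tau> = (if length is = r then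
     (\<Sum>f | f permutes {..<r}. of_int (sign f) *
        (\<Sum>s \<in> Sset r \<tau>. (\<Prod>j<r. of_int (act \<rho> n (- s j) (t ! f j) (is ! j))))) else 0)"
  unfolding P_tuple_def Sset_def by simp

context fixes \<rho> :: "'g::{ab_group_add,finite} \<Rightarrow> nat \<Rightarrow> nat \<Rightarrow> int" and n r :: nat
begin

lemma main5_tuple:
  assumes R: "is_lattice_rep n \<rho>" and t: "t \<in> tuples n r" and r: "r \<ge> 1"
  shows "eqv \<rho> n r (piv n r (\<lambda>is. P_tuple \<rho> n r t is 0)) (sc (cc r TYPE('g)) (delta t))"
proof -
  let ?F = "{f. f permutes {..<r}}" and ?SS = "Sset r (0::'g)"
  let ?sg = "\<lambda>f. (of_int (sign f)::rat)"
  define u where "u f s = map (\<lambda>j. act \<rho> n (- s j) (t ! f j)) [0..<r]" for f and s :: "nat \<Rightarrow> 'g"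
  define E where "E v = fsum (idx n r) (\<lambda>is. sc (\<Prod>j<r. of_int ((v ! j) (is ! j))) (delta (map ev is)))" for v
  define v where "v f = map (\<lambda>j. t ! f j) [0..<r]" for f
  have ut: "u f s \<in> tuples n r" for f s unfolding u_def tuples_def by auto
  have vt: "f permutes {..<r} \<Longrightarrow> v f \<in> tuples n r" for f
    unfolding v_def tuples_def using tuples_nth[OF t] perm_facts(3) by fastforce
  have A: "eqv \<rho> n r (piv n r (\<lambda>is. P_tuple \<rho> n r t is 0)) (fsum ?F (\<lambda>f. sc (?sg f) (fsum ?SS (\<lambda>s. E (u f s)))))"
  proof (rule eqv_ext)
    fix w
    have "piv n r (\<lambda>is. P_tuple \<rho> n r t is 0) w =
      (\<Sum>is\<in>idx n r. (\<Sum>f\<in>?F. ?sg f * (\<Sum>s\<in>?SS. (\<Prod>j<r. of_int (act \<rho> n (- s j) (t ! f j) (is ! j))))) * delta (map ev is) w)"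
      unfolding piv_def fsum_apply sc_apply P_tuple_Sset by (intro sum.cong refl) (simp add: idx_len)
    also have "\<dots> = (\<Sum>is\<in>idx n r. \<Sum>f\<in>?F. \<Sum>s\<in>?SS. ?sg f * ((\<Prod>j<r. of_int ((u f s ! j) (is ! j))) * delta (map ev is) w))"
      by (intro sum.cong refl) (simp add: sum_distrib_left sum_distrib_right u_def mult.assoc)
    also have "\<dots> = (\<Sum>f\<in>?F. \<Sum>s\<in>?SS. \<Sum>is\<in>idx n r. ?sg f * ((\<Prod>j<r. of_int ((u f s ! j) (is ! j))) * delta (map ev is) w))"
      by (subst sum.swap) (simp add: sum.swap[where A="idx n r"])
    also have "\<dots> = fsum ?F (\<lambda>f. sc (?sg f) (fsum ?SS (\<lambda>s. E (u f s)))) w"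
      unfolding E_def by (simp add: sum_distrib_left)
    finally show "piv n r (\<lambda>is. P_tuple \<rho> n r t is 0) w = fsum ?F (\<lambda>f. sc (?sg f) (fsum ?SS (\<lambda>s. E (u f s)))) w" .
  qed
  also have "eqv \<rho> n r \<dots> (fsum ?F (\<lambda>f. sc (?sg f) (fsum ?SS (\<lambda>s. delta (u f s)))))"
    unfolding E_def by (intro eqv_fsum eqv_sc eqv_sym[OF eqv_expand] ut finite_permutes_lt finite_Sset)
  also have "eqv \<rho> n r \<dots> (fsum ?F (\<lambda>f. sc (?sg f) (fsum ?SS (\<lambda>s. delta (v f)))))"
  proof (intro eqv_fsum eqv_sc finite_permutes_lt finite_Sset)
    fix f s assume f: "f \<in> ?F" and s: "s \<in> ?SS"
    have "u f s = map (\<lambda>j. act \<rho> n (- s j) (v f ! j)) [0..<r]" unfolding u_def v_def by simp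
    moreover have "(v f)[0 := act \<rho> n (\<Sum>j<r. - s j) (v f ! 0)] = v f"
    proof -
      have "(\<Sum>j<r. - s j) = 0" using s unfolding Sset_def by (simp add: sum_negf)
      moreover have "v f ! 0 \<in> lat n" using tuples_nth[OF vt] f r by auto
      ultimately show ?thesis using act_zero[OF R] by simp
    qed
    ultimately show "eqv \<rho> n r (delta (u f s)) (delta (v f))"
      using eqv_bal[OF R vt r, of f "\<lambda>j. - s j"] f by simp
  qed
  also have "eqv \<rho> n r \<dots> (fsum ?F (\<lambda>f. sc (?sg f) (fsum ?SS (\<lambda>s. sc (?sg f) (delta t)))))"
    unfolding v_def
    by (intro eqv_fsum eqv_sc finite_permutes_lt finite_Sset) (auto intro!: eqv_perm[rule_format] t)
  also have "eqv \<rho> n r \<dots> (sc (cc r TYPE('g)) (delta t))"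
  proof (rule eqv_ext)
    fix w
    have "fsum ?F (\<lambda>f. sc (?sg f) (fsum ?SS (\<lambda>s. sc (?sg f) (delta t)))) w = (\<Sum>f\<in>?F. \<Sum>s\<in>?SS. delta t w)"
    proof -
      have sq: "?sg f * (?sg f * d) = d" for f d
        by (metis (no_types) mult.assoc mult_1 of_int_1 of_int_mult sign_idempotent)
      have sq2: "?sg f * (c * (?sg f * d)) = c * d" for f c d
        by (metis mult.left_commute sq)
      show ?thesis by (simp add: sum_distrib_left sq sq2)
    qed
    also have "\<dots> = cc r TYPE('g) * delta t w"
      unfolding cc_def using card_Sset[OF r, where \<tau>="0::'g"] card_perms[of r] by simp
    finally show "fsum ?F (\<lambda>f. sc (?sg f) (fsum ?SS (\<lambda>s. sc (?sg f) (delta t)))) w = sc (cc r TYPE('g)) (delta t) w" by simp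
  qed
  finally show ?thesis .
qed

end


lemma P_map_sum:
  assumes "finite A" "{t. x t \<noteq> 0} \<subseteq> A"
  shows "P_map \<rho> n r x is \<tau> = (\<Sum>t\<in>A. x t * P_tuple \<rho> n r t is \<tau>)"
  unfolding P_map_def using assms by (intro sum.mono_neutral_left) auto

lemma sum_delta_mult: "finite M \<Longrightarrow> X \<in> M \<Longrightarrow> (\<Sum>t\<in>M. delta X t * h t) = h X"
proof -
  assume "finite M" "X \<in> M"
  have "(\<Sum>t\<in>M. delta X t * h t) = (\<Sum>t\<in>M. if X = t then h t else 0)"
    by (intro sum.cong) (auto simp: delta_def)
  then show ?thesis using \<open>finite M\<close> \<open>X \<in> M\<close> by (simp add: sum.delta)
qed

lemma conj1_aux:
  assumes R: "is_lattice_rep n \<rho>" and x: "x \<in> rel_span \<rho> n r"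
  shows "finite {t. x t \<noteq> 0} \<and> P_map \<rho> n r x = (\<lambda>_ _. 0)"
  using x
proof (induction rule: rel_span.induct)
  case zero
  show ?case unfolding P_map_def by simp
next
  case (gen g)
  then consider
    (g1) t i a b where "g = (\<lambda>u. delta (t[i := (\<lambda>k. a k + b k)]) u - delta (t[i := a]) u - delta (t[i := b]) u)"
       "t \<in> tuples n r" "i < r" "a \<in> lat n" "b \<in> lat n"
  | (g2) t i j \<sigma> where "g = (\<lambda>u. delta (t[i := act \<rho> n \<sigma> (t ! i)]) u - delta (t[j := act \<rho> n \<sigma> (t ! j)]) u)"
       "t \<in> tuples n r" "i < r" "j < r"
  | (g3) t i j where "g = delta t" "t \<in> tuples n r" "i < j" "j < r" "t ! i = t ! j"
    unfolding rel_gens_def by blast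
  then show ?case
  proof cases
    case g1
    let ?M = "{t[i := (\<lambda>k. a k + b k)], t[i := a], t[i := b]}"
    have sub: "{u. g u \<noteq> 0} \<subseteq> ?M" using g1(1) by (auto simp: delta_def)
    have "P_map \<rho> n r g is \<tau> = 0" for "is" \<tau>
    proof -
      have "P_tuple \<rho> n r (t[i := (\<lambda>k. a k + b k)]) is \<tau> = P_tuple \<rho> n r (t[i := a]) is \<tau> + P_tuple \<rho> n r (t[i := b]) is \<tau>"
        by (rule P_add[OF g1(2,3)])
      moreover have "P_map \<rho> n r g is \<tau> = (\<Sum>u\<in>?M. g u * P_tuple \<rho> n r u is \<tau>)"
        by (rule P_map_sum[OF _ sub]) simp
      ultimately show ?thesis using g1
        by (simp add: sum_subtractf left_diff_distrib sum_delta_mult)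
    qed
    then show ?thesis using finite_subset[OF sub] by auto
  next
    case g2
    let ?M = "{t[i := act \<rho> n \<sigma> (t ! i)], t[j := act \<rho> n \<sigma> (t ! j)]}"
    have sub: "{u. g u \<noteq> 0} \<subseteq> ?M" using g2(1) by (auto simp: delta_def)
    have "P_map \<rho> n r g is \<tau> = 0" for "is" \<tau>
    proof -
      have "P_tuple \<rho> n r (t[i := act \<rho> n \<sigma> (t ! i)]) is \<tau> = P_tuple \<rho> n r t is (\<tau> - \<sigma>)"
        by (rule P_bal[OF R g2(2,3)])
      moreover have "P_tuple \<rho> n r (t[j := act \<rho> n \<sigma> (t ! j)]) is \<tau> = P_tuple \<rho> n r t is (\<tau> - \<sigma>)"
        by (rule P_bal[OF R g2(2,4)])
      moreover have "P_map \<rho> n r g is \<tau> = (\<Sum>u\<in>?M. g u * P_tuple \<rho> n r u is \<tau>)"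
        by (rule P_map_sum[OF _ sub]) simp
      ultimately show ?thesis using g2
        by (simp add: left_diff_distrib sum_subtractf sum_delta_mult)
    qed
    then show ?thesis using finite_subset[OF sub] by auto
  next
    case g3
    have sub: "{u. g u \<noteq> 0} \<subseteq> {t}" using g3(1) by (auto simp: delta_def)
    have "P_map \<rho> n r g is \<tau> = 0" for "is" \<tau>
    proof -
      have "P_map \<rho> n r g is \<tau> = (\<Sum>u\<in>{t}. g u * P_tuple \<rho> n r u is \<tau>)"
        by (rule P_map_sum[OF _ sub]) simp
      then show ?thesis using P_alt[OF g3(3,4,5)] g3(1) by (simp add: delta_def)
    qed
    then show ?thesis using finite_subset[OF sub] by auto
  qed
next
  case (add x y)
  let ?M = "{t. x t \<noteq> 0} \<union> {t. y t \<noteq> 0}"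
  have fin: "finite ?M" using add by auto
  have sub: "{t. x t + y t \<noteq> 0} \<subseteq> ?M" by auto
  have "P_map \<rho> n r (\<lambda>u. x u + y u) is \<tau> = 0" for "is" \<tau>
  proof -
    have "P_map \<rho> n r (\<lambda>u. x u + y u) is \<tau> = (\<Sum>t\<in>?M. (x t + y t) * P_tuple \<rho> n r t is \<tau>)"
      by (rule P_map_sum[OF fin sub])
    also have "\<dots> = (\<Sum>t\<in>?M. x t * P_tuple \<rho> n r t is \<tau>) + (\<Sum>t\<in>?M. y t * P_tuple \<rho> n r t is \<tau>)"
      by (simp add: distrib_right sum.distrib)
    also have "\<dots> = P_map \<rho> n r x is \<tau> + P_map \<rho> n r y is \<tau>"
    proof -
      have "P_map \<rho> n r x is \<tau> = (\<Sum>t\<in>?M. x t * P_tuple \<rho> n r t is \<tau>)" by (rule P_map_sum[OF fin]) auto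
      moreover have "P_map \<rho> n r y is \<tau> = (\<Sum>t\<in>?M. y t * P_tuple \<rho> n r t is \<tau>)" by (rule P_map_sum[OF fin]) auto
      ultimately show ?thesis by simp
    qed
    finally have "P_map \<rho> n r (\<lambda>u. x u + y u) is \<tau> = P_map \<rho> n r x is \<tau> + P_map \<rho> n r y is \<tau>" .
    then show ?thesis using add by (simp add: fun_eq_iff)
  qed
  then show ?case using finite_subset[OF sub fin] by auto
next
  case (smult x c)
  have sub: "{t. c * x t \<noteq> 0} \<subseteq> {t. x t \<noteq> 0}" by auto
  have "P_map \<rho> n r (\<lambda>u. c * x u) is \<tau> = 0" for "is" \<tau>
  proof -
    have "P_map \<rho> n r (\<lambda>u. c * x u) is \<tau> = c * P_map \<rho> n r x is \<tau>"
      unfolding P_map_def by (cases "c = 0") (simp_all add: sum_distrib_left mult.assoc)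
    then show ?thesis using smult by (simp add: fun_eq_iff)
  qed
  then show ?case using finite_subset[OF sub] smult by auto
qed

lemma cc_pos: "cc r TYPE('g::finite) \<noteq> 0"
  unfolding cc_def by simp

lemma conj5:
  fixes \<rho> :: "'g::{ab_group_add,finite} \<Rightarrow> nat \<Rightarrow> nat \<Rightarrow> int"
  assumes R: "is_lattice_rep n \<rho>" and r: "r \<ge> 1" and x: "x \<in> formal n r" and P0: "P_map \<rho> n r x = (\<lambda>_ _. 0)"
  shows "x \<in> rel_span \<rho> n r"
proof -
  let ?A = "{t. x t \<noteq> 0}"
  have fin: "finite ?A" and At: "?A \<subseteq> tuples n r" using x unfolding formal_def by auto
  let ?c = "cc r TYPE('g)"
  have "eqv \<rho> n r (piv n r (\<lambda>is. P_map \<rho> n r x is 0)) (fsum ?A (\<lambda>t. sc (x t) (piv n r (\<lambda>is. P_tuple \<rho> n r t is 0))))"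
  proof (rule eqv_ext)
    fix w
    show "piv n r (\<lambda>is. P_map \<rho> n r x is 0) w = fsum ?A (\<lambda>t. sc (x t) (piv n r (\<lambda>is. P_tuple \<rho> n r t is 0))) w"
      unfolding piv_def P_map_def fsum_apply sc_apply
      by (simp add: sum_distrib_right sum_distrib_left mult.assoc) (rule sum.swap)
  qed
  also have "eqv \<rho> n r \<dots> (fsum ?A (\<lambda>t. sc (x t) (sc ?c (delta t))))"
    using At by (intro eqv_fsum[OF fin] eqv_sc main5_tuple[OF R _ r]) auto
  also have "eqv \<rho> n r \<dots> (sc ?c x)"
  proof (rule eqv_ext)
    fix w
    show "fsum ?A (\<lambda>t. sc (x t) (sc ?c (delta t))) w = sc ?c x w"
    proof (cases "x w = 0")
      case True
      then show ?thesis by (auto simp: delta_def intro!: sum.neutral)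
    next
      case False
      then have "(\<Sum>t\<in>?A. x t * (?c * delta t w)) = x w * (?c * delta w w)"
        using fin by (intro sum.remove[THEN trans]) (auto simp: delta_def split: if_splits intro!: sum.neutral)
      then show ?thesis by (simp add: delta_def)
    qed
  qed
  finally have e: "eqv \<rho> n r (piv n r (\<lambda>is. P_map \<rho> n r x is 0)) (sc ?c x)" .
  have "piv n r (\<lambda>is. P_map \<rho> n r x is 0) = (\<lambda>_. 0)" unfolding P0 piv_def fsum_def by simp
  then have "sc ?c x \<in> rel_span \<rho> n r" using e eqv_sym eqv_zero_iff by metis
  moreover have "?c \<noteq> 0" by (simp add: cc_def)
  ultimately show ?thesis using S_sc[of "sc ?c x" \<rho> n r "1 / ?c"] by (simp add: sc_def)
qed


lemma lookup_single_mult: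
  fixes X :: "'g::{ab_group_add,finite} \<Rightarrow>\<^sub>0 'a::comm_ring_1"
  shows "Poly_Mapping.lookup (Poly_Mapping.single a c * X) k = c * Poly_Mapping.lookup X (k - a)"
proof -
  have "Poly_Mapping.lookup (Poly_Mapping.single a c * X) k =
     (\<Sum>l\<in>UNIV. (if l = k - a then c * Poly_Mapping.lookup X l else 0))"
    unfolding lookup_mult_fin by (intro sum.cong) (auto simp: lookup_single when_def)
  also have "\<dots> = c * Poly_Mapping.lookup X (k - a)"
    by (simp add: sum.delta')
  finally show ?thesis .
qed

lemma lookup_ofint_mult:
  fixes X :: "'g::{ab_group_add,finite} \<Rightarrow>\<^sub>0 'a::comm_ring_1"
  shows "Poly_Mapping.lookup (of_int c * X) k = of_int c * Poly_Mapping.lookup X k"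
  using lookup_single_mult[of 0 "of_int c" X k] by (simp flip: single_of_int)

lemma lookup_map_of_int:
  "Poly_Mapping.lookup (Poly_Mapping.map (of_int :: int \<Rightarrow> rat) D) k = of_int (Poly_Mapping.lookup D k)"
  by (simp add: Poly_Mapping.map.rep_eq when_def)

lemma additive_expand:
  fixes \<psi> :: "(nat \<Rightarrow> int) \<Rightarrow> int"
  assumes add: "\<And>u v. u \<in> lat n \<Longrightarrow> v \<in> lat n \<Longrightarrow> \<psi> (\<lambda>k. u k + v k) = \<psi> u + \<psi> v"
  shows "w \<in> lat n \<Longrightarrow> \<psi> w = (\<Sum>l<n. w l * \<psi> (ev l))"
proof -
  have z: "\<psi> (\<lambda>k. 0) = 0" using add[of "\<lambda>k. 0" "\<lambda>k. 0"] by simp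
  have nat: "\<psi> (\<lambda>k. int m * a k) = int m * \<psi> a" if a: "a \<in> lat n" for m a
  proof (induction m)
    case 0 then show ?case using z by simp
  next
    case (Suc m)
    have "\<psi> (\<lambda>k. int (Suc m) * a k) = \<psi> (\<lambda>k. int m * a k + a k)" by (simp add: algebra_simps)
    also have "\<dots> = \<psi> (\<lambda>k. int m * a k) + \<psi> a" by (rule add[OF lat_smult[OF a] a])
    finally show ?case using Suc by (simp add: algebra_simps)
  qed
  have int: "\<psi> (\<lambda>k. c * a k) = c * \<psi> a" if a: "a \<in> lat n" for c a
  proof (cases "c \<ge> 0")
    case True then show ?thesis using nat[OF a, of "nat c"] by simp
  next
    case False
    have "\<psi> (\<lambda>k. c * a k + (- c) * a k) = \<psi> (\<lambda>k. c * a k) + \<psi> (\<lambda>k. (-c) * a k)"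
      by (rule add[OF lat_smult[OF a] lat_smult[OF a]])
    then show ?thesis using z nat[OF a, of "nat (-c)"] False by simp
  qed
  have sum: "\<psi> (\<lambda>k. \<Sum>m\<in>K. c m * a m k) = (\<Sum>m\<in>K. c m * \<psi> (a m))"
    if "finite K" "\<And>m. m \<in> K \<Longrightarrow> a m \<in> lat n" for K c a
    using that
  proof (induction K rule: finite_induct)
    case empty then show ?case using z by simp
  next
    case (insert m K)
    have "\<psi> (\<lambda>k. \<Sum>m\<in>insert m K. c m * a m k) = \<psi> (\<lambda>k. c m * a m k + (\<Sum>m\<in>K. c m * a m k))"
      using insert by simp
    also have "\<dots> = \<psi> (\<lambda>k. c m * a m k) + \<psi> (\<lambda>k. \<Sum>m\<in>K. c m * a m k)"
      by (rule add[OF lat_smult lat_sum]) (use insert.prems in auto)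
    finally show ?case using insert int by simp
  qed
  assume w: "w \<in> lat n"
  have "\<psi> w = \<psi> (\<lambda>l. \<Sum>k\<in>{..<n}. w k * ev k l)" using lat_expand[OF w] by simp
  also have "\<dots> = (\<Sum>l<n. w l * \<psi> (ev l))" using sum[of "{..<n}" ev w] ev_lat by simp
  finally show ?thesis .
qed

definition Phi :: "('g::{ab_group_add,finite} \<Rightarrow> nat \<Rightarrow> nat \<Rightarrow> int) \<Rightarrow> nat \<Rightarrow> nat \<Rightarrow> (nat \<Rightarrow> int) \<Rightarrow> ('g \<Rightarrow>\<^sub>0 int)" where
  "Phi \<rho> n k v = (\<Sum>\<sigma>\<in>UNIV. Poly_Mapping.single \<sigma> (act \<rho> n (- \<sigma>) v k))"

lemma lookup_Phi: "Poly_Mapping.lookup (Phi \<rho> n k v) \<tau> = act \<rho> n (- \<tau>) v k"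
  unfolding Phi_def lookup_sum by (simp add: lookup_single when_def)

lemma Phi_hom:
  assumes R: "is_lattice_rep n \<rho>"
  shows "is_hom \<rho> n (Phi \<rho> n k)"
  unfolding is_hom_def
proof (intro conjI ballI allI)
  fix u v assume "u \<in> lat n" "v \<in> lat n"
  show "Phi \<rho> n k (\<lambda>k. u k + v k) = Phi \<rho> n k u + Phi \<rho> n k v"
    by (rule poly_mapping_eqI) (simp add: lookup_Phi lookup_add act_add)
next
  fix \<sigma> u assume u: "u \<in> lat n"
  show "Phi \<rho> n k (act \<rho> n \<sigma> u) = Poly_Mapping.single \<sigma> 1 * Phi \<rho> n k u"
    by (rule poly_mapping_eqI) (simp add: lookup_Phi lookup_single_mult act_comp[OF R u] algebra_simps)
qed

lemma hom_lookup:
  fixes \<rho> :: "'g::{ab_group_add,finite} \<Rightarrow> nat \<Rightarrow> nat \<Rightarrow> int"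
  assumes h: "is_hom \<rho> n \<phi>" and v: "v \<in> lat n"
  shows "Poly_Mapping.lookup (\<phi> v) \<sigma> = (\<Sum>l<n. act \<rho> n (- \<sigma>) v l * Poly_Mapping.lookup (\<phi> (ev l)) 0)"
proof -
  have "Poly_Mapping.lookup (\<phi> v) \<sigma> = Poly_Mapping.lookup (\<phi> (act \<rho> n (- \<sigma>) v)) 0"
  proof -
    have "\<phi> (act \<rho> n (- \<sigma>) v) = Poly_Mapping.single (- \<sigma>) 1 * \<phi> v" using h v unfolding is_hom_def by blast
    moreover have "Poly_Mapping.lookup (Poly_Mapping.single (- \<sigma>) 1 * \<phi> v) 0 = Poly_Mapping.lookup (\<phi> v) \<sigma>"
      by (simp only: lookup_single_mult) simp
    ultimately show ?thesis by simp
  qed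
  also have "\<dots> = (\<Sum>l<n. act \<rho> n (- \<sigma>) v l * Poly_Mapping.lookup (\<phi> (ev l)) 0)"
    by (rule additive_expand[of n "\<lambda>w. Poly_Mapping.lookup (\<phi> w) 0"])
       (use h in \<open>auto simp: is_hom_def lookup_add\<close>)
  finally show ?thesis .
qed

lemma prod_sum_idx:
  fixes g :: "nat \<Rightarrow> nat \<Rightarrow> 'a::comm_ring_1"
  shows "(\<Prod>i<r. \<Sum>l<n. g i l) = (\<Sum>ls\<in>idx n r. \<Prod>i<r. g i (ls ! i))"
proof (induction r)
  case 0 then show ?case by (simp add: idx_0)
next
  case (Suc r)
  have "(\<Prod>i<Suc r. \<Sum>l<n. g i l) = (\<Sum>ls\<in>idx n r. \<Prod>i<r. g i (ls ! i)) * (\<Sum>l<n. g r l)"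
    using Suc by (simp add: prod.lessThan_Suc)
  also have "\<dots> = (\<Sum>ls\<in>idx n r. \<Sum>l<n. (\<Prod>i<r. g i (ls ! i)) * g r l)"
    by (simp add: sum_distrib_left sum_distrib_right) (rule sum.swap)
  also have "\<dots> = (\<Sum>ls\<in>idx n r. \<Sum>l<n. \<Prod>i<Suc r. g i ((ls @ [l]) ! i))"
    by (intro sum.cong refl) (auto simp: prod.lessThan_Suc nth_append idx_len intro!: prod.cong)
  also have "\<dots> = (\<Sum>ls\<in>idx n (Suc r). \<Prod>i<Suc r. g i (ls ! i))"
    by (simp add: sum_idx_Suc)
  finally show ?case .
qed

lemma conv_expand:
  fixes H :: "nat \<Rightarrow> nat \<Rightarrow> 'g::{ab_group_add,finite} \<Rightarrow> 'a::comm_ring_1"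
  shows "conv r (\<lambda>i \<sigma>. \<Sum>l<n. c i l * H i l \<sigma>) \<tau> = (\<Sum>ls\<in>idx n r. (\<Prod>i<r. c i (ls ! i)) * conv r (\<lambda>i \<sigma>. H i (ls ! i) \<sigma>) \<tau>)"
proof -
  have "conv r (\<lambda>i \<sigma>. \<Sum>l<n. c i l * H i l \<sigma>) \<tau> = (\<Sum>s\<in>Sset r \<tau>. \<Sum>ls\<in>idx n r. \<Prod>i<r. c i (ls ! i) * H i (ls ! i) (s i))"
    unfolding conv_def by (simp add: prod_sum_idx)
  also have "\<dots> = (\<Sum>ls\<in>idx n r. \<Sum>s\<in>Sset r \<tau>. (\<Prod>i<r. c i (ls ! i)) * (\<Prod>i<r. H i (ls ! i) (s i)))"
    by (subst sum.swap) (simp add: prod.distrib)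
  also have "\<dots> = (\<Sum>ls\<in>idx n r. (\<Prod>i<r. c i (ls ! i)) * conv r (\<lambda>i \<sigma>. H i (ls ! i) \<sigma>) \<tau>)"
    unfolding conv_def by (simp add: sum_distrib_left)
  finally show ?thesis .
qed

lemma det_lookup:
  fixes \<phi>s :: "nat \<Rightarrow> (nat \<Rightarrow> int) \<Rightarrow> ('g::{ab_group_add,finite} \<Rightarrow>\<^sub>0 int)"
  shows "(of_int (Poly_Mapping.lookup (det (mat r r (\<lambda>(i, j). \<phi>s i (t ! j)))) \<tau>)::rat) =
    (\<Sum>p | p permutes {..<r}. of_int (sign p) * conv r (\<lambda>i \<sigma>. of_int (Poly_Mapping.lookup (\<phi>s i (t ! p i)) \<sigma>)) \<tau>)"
proof -
  have d: "det (mat r r (\<lambda>(i, j). \<phi>s i (t ! j))) = (\<Sum>p \<in> {p. p permutes {..<r}}. of_int (sign p) * (\<Prod>i<r. \<phi>s i (t ! p i)))"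
  proof -
    have "det (mat r r (\<lambda>(i, j). \<phi>s i (t ! j))) = (\<Sum>p \<in> {p. p permutes {0..<r}}. of_int (sign p) * (\<Prod>i = 0..<r. mat r r (\<lambda>(i, j). \<phi>s i (t ! j)) $$ (i, p i)))"
      by (rule det_def') simp
    also have "\<dots> = (\<Sum>p \<in> {p. p permutes {..<r}}. of_int (sign p) * (\<Prod>i<r. \<phi>s i (t ! p i)))"
    proof (intro sum.cong)
      show "{p. p permutes {0..<r}} = {p. p permutes {..<r}}" by (simp add: atLeast0LessThan)
    next
      fix p assume "p \<in> {p. p permutes {..<r}}"
      then have p: "p permutes {..<r}" by simp
      show "of_int (sign p) * (\<Prod>i = 0..<r. mat r r (\<lambda>(i, j). \<phi>s i (t ! j)) $$ (i, p i)) = of_int (sign p) * (\<Prod>i<r. \<phi>s i (t ! p i))"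
        using perm_facts(3)[OF p] by (auto simp: atLeast0LessThan intro!: prod.cong)
    qed
    finally show ?thesis .
  qed
  show ?thesis unfolding d lookup_sum
    by (simp add: lookup_ofint_mult lookup_prod_conv conv_def of_int_sum of_int_prod)
qed

lemma P_tuple_idx:
  "ls \<in> idx n r \<Longrightarrow> P_tuple \<rho> n r t ls \<tau> = (\<Sum>p | p permutes {..<r}. of_int (sign p) * conv r (\<lambda>i \<sigma>. of_int (act \<rho> n (- \<sigma>) (t ! p i) (ls ! i))) \<tau>)"
  unfolding P_tuple_conv PF_def by (simp add: idx_len)

lemma det_lookup_P:
  fixes \<phi>s :: "nat \<Rightarrow> (nat \<Rightarrow> int) \<Rightarrow> ('g::{ab_group_add,finite} \<Rightarrow>\<^sub>0 int)"
  assumes h: "\<And>i. i < r \<Longrightarrow> is_hom \<rho> n (\<phi>s i)" and t: "t \<in> tuples n r"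
  shows "(of_int (Poly_Mapping.lookup (det (mat r r (\<lambda>(i, j). \<phi>s i (t ! j)))) \<tau>)::rat) =
    (\<Sum>ls\<in>idx n r. of_int (\<Prod>i<r. Poly_Mapping.lookup (\<phi>s i (ev (ls ! i))) 0) * P_tuple \<rho> n r t ls \<tau>)"
proof -
  let ?\<psi> = "\<lambda>i l. (of_int (Poly_Mapping.lookup (\<phi>s i (ev l)) 0)::rat)"
  have "(of_int (Poly_Mapping.lookup (det (mat r r (\<lambda>(i, j). \<phi>s i (t ! j)))) \<tau>)::rat) =
    (\<Sum>p | p permutes {..<r}. of_int (sign p) * conv r (\<lambda>i \<sigma>. \<Sum>l<n. ?\<psi> i l * of_int (act \<rho> n (- \<sigma>) (t ! p i) l)) \<tau>)"
    unfolding det_lookup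
  proof (intro sum.cong refl arg_cong[where f="\<lambda>x. _ * x"] conv_cong)
    fix p i \<sigma> assume p: "p \<in> {p. p permutes {..<r}}" and i: "i < r"
    have "t ! p i \<in> lat n" using tuples_nth[OF t] perm_facts(3)[of p r] p i by auto
    then show "of_int (Poly_Mapping.lookup (\<phi>s i (t ! p i)) \<sigma>) = (\<Sum>l<n. ?\<psi> i l * of_int (act \<rho> n (- \<sigma>) (t ! p i) l))"
      using hom_lookup[OF h[OF i]] by (simp add: of_int_sum mult.commute)
  qed
  also have "\<dots> = (\<Sum>p | p permutes {..<r}. of_int (sign p) * (\<Sum>ls\<in>idx n r. (\<Prod>i<r. ?\<psi> i (ls ! i)) * conv r (\<lambda>i \<sigma>. of_int (act \<rho> n (- \<sigma>) (t ! p i) (ls ! i))) \<tau>))"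
    by (simp add: conv_expand)
  also have "\<dots> = (\<Sum>ls\<in>idx n r. (\<Prod>i<r. ?\<psi> i (ls ! i)) * P_tuple \<rho> n r t ls \<tau>)"
    by (simp add: P_tuple_idx sum_distrib_left sum_distrib_right algebra_simps) (rule sum.swap)
  finally show ?thesis by (simp add: of_int_prod)
qed

lemma wedge_lookup:
  fixes \<phi>s :: "nat \<Rightarrow> (nat \<Rightarrow> int) \<Rightarrow> ('g::{ab_group_add,finite} \<Rightarrow>\<^sub>0 int)"
  assumes h: "\<And>i. i < r \<Longrightarrow> is_hom \<rho> n (\<phi>s i)" and x: "x \<in> formal n r"
  shows "Poly_Mapping.lookup (wedge_hom r \<phi>s x) \<tau> =
    (\<Sum>ls\<in>idx n r. of_int (\<Prod>i<r. Poly_Mapping.lookup (\<phi>s i (ev (ls ! i))) 0) * P_map \<rho> n r x ls \<tau>)"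
proof -
  have xt: "x t \<noteq> 0 \<Longrightarrow> t \<in> tuples n r" for t using x unfolding formal_def by auto
  have "Poly_Mapping.lookup (wedge_hom r \<phi>s x) \<tau> =
     (\<Sum>t\<in>{t. x t \<noteq> 0}. x t * of_int (Poly_Mapping.lookup (det (mat r r (\<lambda>(i, j). \<phi>s i (t ! j)))) \<tau>))"
    unfolding wedge_hom_def lookup_sum by (simp add: lookup_single_mult lookup_map_of_int)
  also have "\<dots> = (\<Sum>t\<in>{t. x t \<noteq> 0}. x t * (\<Sum>ls\<in>idx n r. of_int (\<Prod>i<r. Poly_Mapping.lookup (\<phi>s i (ev (ls ! i))) 0) * P_tuple \<rho> n r t ls \<tau>))"
    by (intro sum.cong refl) (simp add: det_lookup_P[OF h xt])
  also have "\<dots> = (\<Sum>ls\<in>idx n r. of_int (\<Prod>i<r. Poly_Mapping.lookup (\<phi>s i (ev (ls ! i))) 0) * P_map \<rho> n r x ls \<tau>)"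
    unfolding P_map_def by (simp add: sum_distrib_left algebra_simps) (rule sum.swap)
  finally show ?thesis .
qed


lemma P_tuple_bad:
  assumes "length is \<noteq> r \<or> (\<exists>i\<in>set is. n \<le> i)"
  shows "P_tuple \<rho> n r t is \<tau> = 0"
proof (cases "length is = r")
  case True
  from assms True obtain i0 where "i0 \<in> set is" "n \<le> i0" by blast
  then obtain j where j: "j < length is" "n \<le> is ! j" by (metis in_set_conv_nth)
  have "conv r (PF \<rho> n t is f) \<tau> = 0" for f
    using j True by (intro conv_zero_factor[of j]) (auto simp: PF_def)
  then show ?thesis unfolding P_tuple_conv by simp
qed (simp add: P_tuple_conv)

lemma P_map_bad:
  "length is \<noteq> r \<or> (\<exists>i\<in>set is. n \<le> i) \<Longrightarrow> P_map \<rho> n r x is \<tau> = 0"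
  unfolding P_map_def by (simp add: P_tuple_bad)

lemma not_idx: "is \<notin> idx n r \<Longrightarrow> length is \<noteq> r \<or> (\<exists>i\<in>set is. n \<le> i)"
  unfolding idx_def by (force simp: subset_iff not_le)

lemma prod_ind_idx:
  assumes "is \<in> idx n r" "ls \<in> idx n r"
  shows "(\<Prod>i<r. (if is ! i = ls ! i then 1 else 0) :: int) = (if ls = is then 1 else 0)"
proof (cases "ls = is")
  case True then show ?thesis by simp
next
  case False
  then obtain i where "i < r" "is ! i \<noteq> ls ! i" using assms idx_len nth_equalityI by metis
  then have "(\<Prod>i<r. (if is ! i = ls ! i then 1 else 0) :: int) = 0" by (intro prod_zero) auto
  then show ?thesis using False by simp
qed

lemma P_map_int:
  fixes \<rho> :: "'g::{ab_group_add,finite} \<Rightarrow> nat \<Rightarrow> nat \<Rightarrow> int"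
  assumes R: "is_lattice_rep n \<rho>" and x: "x \<in> rubin \<rho> n r"
  shows "P_map \<rho> n r x is \<tau> \<in> \<int>"
proof (cases "is \<in> idx n r")
  case False then show ?thesis by (simp add: P_map_bad[OF not_idx[OF False]])
next
  case True
  let ?\<phi>s = "\<lambda>i. Phi \<rho> n (is ! i)"
  have h: "\<And>i. i < r \<Longrightarrow> is_hom \<rho> n (?\<phi>s i)" using Phi_hom[OF R] by blast
  have xf: "x \<in> formal n r" using x unfolding rubin_def by blast
  have "wedge_hom r ?\<phi>s x \<in> range (Poly_Mapping.map of_int)"
    using x h unfolding rubin_def by simp
  then obtain y where y: "wedge_hom r ?\<phi>s x = Poly_Mapping.map of_int y" by blast
  have lk: "Poly_Mapping.lookup (Phi \<rho> n k (ev l)) 0 = (if k = l then 1 else 0)" if "l < n" for k l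
    using that by (simp add: lookup_Phi act_zero[OF R ev_lat[OF that]]) (simp add: ev_def)
  have "Poly_Mapping.lookup (wedge_hom r ?\<phi>s x) \<tau> =
     (\<Sum>ls\<in>idx n r. of_int (\<Prod>i<r. Poly_Mapping.lookup (Phi \<rho> n (is ! i) (ev (ls ! i))) 0) * P_map \<rho> n r x ls \<tau>)"
    by (rule wedge_lookup[OF h xf])
  also have "\<dots> = (\<Sum>ls\<in>idx n r. of_int (if ls = is then 1 else 0) * P_map \<rho> n r x ls \<tau>)"
  proof (intro sum.cong refl)
    fix ls assume ls: "ls \<in> idx n r"
    have "(\<Prod>i<r. Poly_Mapping.lookup (Phi \<rho> n (is ! i) (ev (ls ! i))) 0) = (\<Prod>i<r. if is ! i = ls ! i then 1 else 0)"
      using ls by (intro prod.cong refl) (simp add: lk idx_nth)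
    then show "of_int (\<Prod>i<r. Poly_Mapping.lookup (Phi \<rho> n (is ! i) (ev (ls ! i))) 0) * P_map \<rho> n r x ls \<tau> =
        of_int (if ls = is then 1 else 0) * P_map \<rho> n r x ls \<tau>"
      using prod_ind_idx[OF True ls] by simp
  qed
  also have "\<dots> = (\<Sum>ls\<in>idx n r. if ls = is then P_map \<rho> n r x ls \<tau> else 0)"
    by (intro sum.cong) auto
  also have "\<dots> = P_map \<rho> n r x is \<tau>" using True by (simp add: sum.delta')
  finally show ?thesis using y by (metis Ints_of_int lookup_map_of_int)
qed

lemma conj3:
  fixes \<rho> :: "'g::{ab_group_add,finite} \<Rightarrow> nat \<Rightarrow> nat \<Rightarrow> int"
  assumes R: "is_lattice_rep n \<rho>" and r: "r \<ge> 1" and x: "x \<in> rubin \<rho> n r"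
  shows "P_map \<rho> n r x \<in> star \<rho> n r"
proof -
  have xf: "x \<in> formal n r" using x unfolding rubin_def by blast
  have xt: "x t \<noteq> 0 \<Longrightarrow> t \<in> tuples n r" for t using xf unfolding formal_def by auto
  have Q: "in_Qtensor n r (P_map \<rho> n r x)" unfolding in_Qtensor_def using P_map_bad by blast
  have A: "antisymmetric r (P_map \<rho> n r x)"
    unfolding antisymmetric_def P_map_def by (auto simp: P_perm_is sum_distrib_left algebra_simps)
  have C: "c_act \<rho> n \<sigma> (P_map \<rho> n r x) = g_act \<sigma> (P_map \<rho> n r x)" for \<sigma>
  proof (intro ext)
    fix "is" \<tau>
    show "c_act \<rho> n \<sigma> (P_map \<rho> n r x) is \<tau> = g_act \<sigma> (P_map \<rho> n r x) is \<tau>"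
    proof (cases "is")
      case Nil then show ?thesis using r unfolding c_act_def g_act_def by (simp add: P_map_bad)
    next
      case (Cons i rest)
      show ?thesis
      proof (cases "i < n")
        case False then show ?thesis using Cons unfolding c_act_def g_act_def by (simp add: P_map_bad)
      next
        case True
        have "P_tuple \<rho> n r t is (\<tau> - \<sigma>) = (\<Sum>j<n. of_int (\<rho> \<sigma> i j) * P_tuple \<rho> n r t (j # rest) \<tau>)" if "x t \<noteq> 0" for t
          using fun_cong[OF fun_cong[OF P_cact[OF R xt[OF that] r, of \<sigma>]], of "is" \<tau>] True Cons
          unfolding c_act_def g_act_def by simp
        then show ?thesis using True Cons unfolding c_act_def g_act_def P_map_def
          by (simp add: sum_distrib_left algebra_simps) (rule sum.swap)
      qed
    qed
  qed
  show ?thesis unfolding star_def in_tensor_def using Q A C P_map_int[OF R x] by blast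
qed


definition permL :: "nat \<Rightarrow> (nat \<Rightarrow> nat) \<Rightarrow> nat list \<Rightarrow> nat list" where
  "permL r f xs = map (\<lambda>j. xs ! f j) [0..<r]"

lemma star_antisym:
  assumes T: "T \<in> star \<rho> n r" and f: "f permutes {..<r}" and len: "length xs = r"
  shows "T (permL r f xs) \<tau> = of_int (sign f) * T xs \<tau>"
  using T f len unfolding star_def antisymmetric_def permL_def by blast

lemma star_Q: "T \<in> star \<rho> n r \<Longrightarrow> length is \<noteq> r \<or> (\<exists>i\<in>set is. n \<le> i) \<Longrightarrow> T is \<tau> = 0"
  unfolding star_def in_tensor_def in_Qtensor_def by blast

lemma star_slot0:
  assumes T: "T \<in> star \<rho> n r" and i: "i < n"
  shows "(\<Sum>k<n. of_int (\<rho> \<sigma> i k) * T (k # rest) \<tau>) = T (i # rest) (\<tau> - \<sigma>)"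
proof -
  have "c_act \<rho> n \<sigma> T (i # rest) \<tau> = g_act \<sigma> T (i # rest) \<tau>" using T unfolding star_def by simp
  then show ?thesis using i unfolding c_act_def g_act_def by simp
qed

lemma permL_idx: "f permutes {..<r} \<Longrightarrow> xs \<in> idx n r \<Longrightarrow> permL r f xs \<in> idx n r"
proof -
  assume f: "f permutes {..<r}" and xs: "xs \<in> idx n r"
  have "xs ! f j < n" if "j < r" for j using idx_nth[OF xs] perm_facts(3)[OF f] that by blast
  then show ?thesis unfolding permL_def idx_def by auto
qed

lemma star_slot:
  assumes T: "T \<in> star \<rho> n r" and js: "js \<in> idx n r" and j: "j < r"
  shows "(\<Sum>k<n. of_int (\<rho> \<sigma> (js ! j) k) * T (js[j := k]) \<tau>) = T js (\<tau> - \<sigma>)"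
proof (cases "j = 0")
  case True
  obtain i rest where js0: "js = i # rest" using js j unfolding idx_def by (cases js) auto
  have "i < n" using idx_nth[OF js, of 0] j js0 by simp
  then show ?thesis using star_slot0[OF T] js0 True by simp
next
  case False
  let ?w = "Transposition.transpose 0 j"
  have w: "?w permutes {..<r}" using j by (intro permutes_swap_id) auto
  have sw: "of_int (sign ?w) = (-1::rat)" using False by (simp add: sign_swap_id)
  have lenjs: "length js = r" using js by (rule idx_len)
  have anti: "T xs \<tau>' = - T (permL r ?w xs) \<tau>'" if "length xs = r" for xs \<tau>'
    using star_antisym[OF T w that, of \<tau>'] sw by simp
  have pk: "permL r ?w (js[j := k]) = (permL r ?w js)[0 := k]" for k
    unfolding permL_def using j False lenjs
    by (intro nth_equalityI) (auto simp: nth_list_update Transposition.transpose_def)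
  have p0: "permL r ?w js ! 0 = js ! j" unfolding permL_def using j by (simp add: Transposition.transpose_def)
  have pidx: "permL r ?w js \<in> idx n r" by (rule permL_idx[OF w js])
  obtain i rest where pjs: "permL r ?w js = i # rest" using pidx j unfolding idx_def by (cases "permL r ?w js") auto
  have i: "i < n" using idx_nth[OF pidx, of 0] j pjs by simp
  have "(\<Sum>k<n. of_int (\<rho> \<sigma> (js ! j) k) * T (js[j := k]) \<tau>) = - (\<Sum>k<n. of_int (\<rho> \<sigma> i k) * T (k # rest) \<tau>)"
    using anti lenjs pk pjs p0 by (simp add: sum_negf)
  also have "\<dots> = - T (i # rest) (\<tau> - \<sigma>)" using star_slot0[OF T i] by simp
  also have "\<dots> = T js (\<tau> - \<sigma>)" using anti[OF lenjs, of "\<tau> - \<sigma>"] pjs by simp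
  finally show ?thesis .
qed

definition Am :: "nat \<Rightarrow> nat \<Rightarrow> nat \<Rightarrow> nat list \<Rightarrow> nat list set" where
  "Am n r m js = {is \<in> idx n r. \<forall>j. m \<le> j \<and> j < r \<longrightarrow> is ! j = js ! j}"

lemma finite_Am[simp]: "finite (Am n r m js)"
  unfolding Am_def by simp

lemma Am_0: "js \<in> idx n r \<Longrightarrow> Am n r 0 js = {js}"
  unfolding Am_def by (auto simp: idx_len intro: nth_equalityI)

lemma Am_r: "Am n r r js = idx n r"
  unfolding Am_def by auto

lemma Am_Suc:
  assumes js: "js \<in> idx n r" and m: "m < r"
  shows "Am n r (Suc m) js \<inter> {is. is ! m = k} = Am n r m (js[m := k])"
  using js m unfolding Am_def by (auto simp: idx_len nth_list_update)

lemma sum_split_m: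
  fixes A :: "nat list set"
  assumes "\<And>is. is \<in> A \<Longrightarrow> is ! m < n" "finite A"
  shows "(\<Sum>is\<in>A. h is) = (\<Sum>k<n. \<Sum>is\<in>A \<inter> {is. is ! m = k}. h is)"
proof -
  have "(\<Sum>is\<in>A. h is) = (\<Sum>is\<in>A. \<Sum>k<n. if is ! m = k then h is else 0)"
  proof (intro sum.cong refl)
    fix x assume "x \<in> A"
    then have "x ! m \<in> {..<n}" using assms(1) by auto
    then show "h x = (\<Sum>k<n. if x ! m = k then h x else 0)" by (subst sum.delta') auto
  qed
  also have "\<dots> = (\<Sum>k<n. \<Sum>is\<in>A. if is ! m = k then h is else 0)" by (rule sum.swap)
  also have "\<dots> = (\<Sum>k<n. \<Sum>is\<in>A \<inter> {is. is ! m = k}. h is)"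
    using assms(2) by (simp add: sum.inter_filter Int_def)
  finally show ?thesis .
qed

lemma star_BB:
  assumes T: "T \<in> star \<rho> n r"
  shows "js \<in> idx n r \<Longrightarrow> m \<le> r \<Longrightarrow> (\<Sum>is\<in>Am n r m js. T is \<tau> * (\<Prod>j<m. of_int (\<rho> (a j) (js ! j) (is ! j)))) = T js (\<tau> - (\<Sum>j<m. a j))"
proof (induction m arbitrary: js)
  case 0
  then show ?case by (simp add: Am_0)
next
  case (Suc m)
  then have js: "js \<in> idx n r" and m: "m < r" by auto
  let ?c = "\<lambda>k. (of_int (\<rho> (a m) (js ! m) k)::rat)"
  have "(\<Sum>is\<in>Am n r (Suc m) js. T is \<tau> * (\<Prod>j<Suc m. of_int (\<rho> (a j) (js ! j) (is ! j)))) =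
     (\<Sum>k<n. \<Sum>is\<in>Am n r (Suc m) js \<inter> {is. is ! m = k}. T is \<tau> * (\<Prod>j<Suc m. of_int (\<rho> (a j) (js ! j) (is ! j))))"
    by (rule sum_split_m) (use m in \<open>auto simp: Am_def idx_nth\<close>)
  also have "\<dots> = (\<Sum>k<n. ?c k * (\<Sum>is\<in>Am n r m (js[m := k]). T is \<tau> * (\<Prod>j<m. of_int (\<rho> (a j) (js[m := k] ! j) (is ! j)))))"
  proof (intro sum.cong refl)
    fix k assume k: "k \<in> {..<n}"
    show "(\<Sum>is\<in>Am n r (Suc m) js \<inter> {is. is ! m = k}. T is \<tau> * (\<Prod>j<Suc m. of_int (\<rho> (a j) (js ! j) (is ! j)))) =
       ?c k * (\<Sum>is\<in>Am n r m (js[m := k]). T is \<tau> * (\<Prod>j<m. of_int (\<rho> (a j) (js[m := k] ! j) (is ! j))))"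
      unfolding Am_Suc[OF js m] sum_distrib_left
    proof (intro sum.cong refl)
      fix "is" assume "is": "is \<in> Am n r m (js[m := k])"
      then have "is ! m = k" using m js unfolding Am_def by (auto simp: idx_len)
      moreover have "(\<Prod>j<m. of_int (\<rho> (a j) (js[m := k] ! j) (is ! j))) = (\<Prod>j<m. (of_int (\<rho> (a j) (js ! j) (is ! j))::rat))"
        by (intro prod.cong refl) simp
      ultimately show "T is \<tau> * (\<Prod>j<Suc m. of_int (\<rho> (a j) (js ! j) (is ! j))) =
         ?c k * (T is \<tau> * (\<Prod>j<m. of_int (\<rho> (a j) (js[m := k] ! j) (is ! j))))"
        by (simp add: prod.lessThan_Suc algebra_simps)
    qed
  qed
  also have "\<dots> = (\<Sum>k<n. ?c k * T (js[m := k]) (\<tau> - (\<Sum>j<m. a j)))"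
  proof (intro sum.cong refl arg_cong[where f="\<lambda>x. _ * x"])
    fix k assume k: "k \<in> {..<n}"
    have jk: "js[m := k] \<in> idx n r" using js k unfolding idx_def by (auto dest: set_update_subset_insert[THEN subsetD])
    show "(\<Sum>is\<in>Am n r m (js[m := k]). T is \<tau> * (\<Prod>j<m. of_int (\<rho> (a j) (js[m := k] ! j) (is ! j)))) =
        T (js[m := k]) (\<tau> - (\<Sum>j<m. a j))"
      by (rule Suc.IH[OF jk]) (use m in simp)
  qed
  also have "\<dots> = T js (\<tau> - (\<Sum>j<m. a j) - a m)" by (rule star_slot[OF T js m])
  finally show ?case by (simp add: algebra_simps)
qed

lemma act_ev: "i < n \<Longrightarrow> k < n \<Longrightarrow> act \<rho> n \<sigma> (ev k) i = \<rho> \<sigma> i k"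
proof -
  assume i: "i < n" and k: "k < n"
  have "act \<rho> n \<sigma> (ev k) i = (\<Sum>l<n. \<rho> \<sigma> i l * ev k l)"
    using i unfolding act_def by simp
  also have "\<dots> = (\<Sum>l<n. if k = l then \<rho> \<sigma> i l else 0)"
    unfolding ev_def by (rule sum.cong) auto
  also have "\<dots> = \<rho> \<sigma> i k" using k by (subst sum.delta') auto
  finally show ?thesis .
qed

lemma P_ev:
  assumes "is": "is \<in> idx n r" and js: "js \<in> idx n r"
  shows "P_tuple \<rho> n r (map ev is) js \<tau> = (\<Sum>f | f permutes {..<r}. of_int (sign f) *
     (\<Sum>s\<in>Sset r \<tau>. \<Prod>j<r. of_int (\<rho> (- s j) (js ! j) (is ! f j))))"
  unfolding P_tuple_Sset using js
proof (simp add: idx_len, intro sum.cong refl arg_cong[where f="\<lambda>x. _ * x"] prod.cong)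
  fix f j assume f: "f \<in> {f. f permutes {..<r}}" and j: "j \<in> {..<r}"
  then have fj: "f j < r" using perm_facts(3)[of f r] by auto
  then show "(of_int (act \<rho> n (- s j) (map ev is ! f j) (js ! j))::rat) = of_int (\<rho> (- s j) (js ! j) (is ! f j))" for s
    using "is" js j by (simp add: idx_len idx_nth act_ev)
qed

lemma permL_inv:
  assumes f: "f permutes {..<r}" and xs: "length xs = r"
  shows "permL r (Hilbert_Choice.inv f) (permL r f xs) = xs" "permL r f (permL r (Hilbert_Choice.inv f) xs) = xs"
  using xs perm_facts[OF f] unfolding permL_def by (auto intro!: nth_equalityI)

lemma reindex_perm:
  assumes T: "T \<in> star \<rho> n r" and f: "f permutes {..<r}"
  shows "(\<Sum>is\<in>idx n r. T is 0 * (\<Prod>j<r. g j (is ! f j))) = of_int (sign f) * (\<Sum>is\<in>idx n r. T is 0 * (\<Prod>j<r. g j (is ! j)))"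
  unfolding sum_distrib_left
proof (rule sum.reindex_bij_witness[where j="permL r f" and i="permL r (Hilbert_Choice.inv f)"])
  fix a assume a: "a \<in> idx n r"
  show "permL r (Hilbert_Choice.inv f) (permL r f a) = a" by (rule permL_inv(1)[OF f idx_len[OF a]])
  show "permL r f a \<in> idx n r" by (rule permL_idx[OF f a])
  have "T (permL r f a) 0 = of_int (sign f) * T a 0" by (rule star_antisym[OF T f idx_len[OF a]])
  moreover have "(\<Prod>j<r. g j (permL r f a ! j)) = (\<Prod>j<r. g j (a ! f j))"
    unfolding permL_def by (intro prod.cong) auto
  moreover have "(of_int (sign f) * of_int (sign f) :: rat) = 1"
    by (metis of_int_1 of_int_mult sign_idempotent)
  ultimately show "of_int (sign f) * (T (permL r f a) 0 * (\<Prod>j<r. g j (permL r f a ! j))) = T a 0 * (\<Prod>j<r. g j (a ! f j))"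
    by (metis (no_types, lifting) mult.assoc mult_1)
next
  fix b assume b: "b \<in> idx n r"
  show "permL r f (permL r (Hilbert_Choice.inv f) b) = b" by (rule permL_inv(2)[OF f idx_len[OF b]])
  show "permL r (Hilbert_Choice.inv f) b \<in> idx n r" by (rule permL_idx[OF permutes_inv[OF f] b])
qed

lemma COMP:
  fixes \<rho> :: "'g::{ab_group_add,finite} \<Rightarrow> nat \<Rightarrow> nat \<Rightarrow> int"
  assumes T: "T \<in> star \<rho> n r" and r: "r \<ge> 1" and js: "js \<in> idx n r"
  shows "(\<Sum>is\<in>idx n r. T is 0 * P_tuple \<rho> n r (map ev is) js \<tau>) = cc r TYPE('g) * T js \<tau>"
proof -
  let ?F = "{f. f permutes {..<r}}" and ?SS = "Sset r \<tau>"
  let ?R = "\<lambda>s j k. (of_int (\<rho> (- s j) (js ! j) k)::rat)"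
  have "(\<Sum>is\<in>idx n r. T is 0 * P_tuple \<rho> n r (map ev is) js \<tau>) =
     (\<Sum>is\<in>idx n r. T is 0 * (\<Sum>f\<in>?F. of_int (sign f) * (\<Sum>s\<in>?SS. \<Prod>j<r. ?R s j (is ! f j))))"
    using js by (intro sum.cong refl) (simp add: P_ev)
  also have "\<dots> = (\<Sum>f\<in>?F. of_int (sign f) * (\<Sum>s\<in>?SS. \<Sum>is\<in>idx n r. T is 0 * (\<Prod>j<r. ?R s j (is ! f j))))"
    by (simp add: sum_distrib_left sum_distrib_right algebra_simps sum.swap[of _ "idx n r"])
  also have "\<dots> = (\<Sum>f\<in>?F. of_int (sign f) * (\<Sum>s\<in>?SS. of_int (sign f) * (\<Sum>is\<in>idx n r. T is 0 * (\<Prod>j<r. ?R s j (is ! j)))))"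
    using reindex_perm[OF T] by (intro sum.cong refl arg_cong[where f="\<lambda>x. _ * x"]) auto
  also have "\<dots> = (\<Sum>f\<in>?F. \<Sum>s\<in>?SS. T js \<tau>)"
  proof (intro sum.cong refl)
    fix f
    have e: "(\<Sum>is\<in>idx n r. T is 0 * (\<Prod>j<r. ?R s j (is ! j))) = T js \<tau>" if s: "s \<in> ?SS" for s
    proof -
      have "(\<Sum>is\<in>idx n r. T is 0 * (\<Prod>j<r. ?R s j (is ! j))) = T js (0 - (\<Sum>j<r. - s j))"
        using star_BB[OF T js order.refl, of 0 "\<lambda>j. - s j"] by (simp add: Am_r)
      also have "\<dots> = T js \<tau>" using s unfolding Sset_def by (simp add: sum_negf)
      finally show ?thesis .
    qed
    have sq: "(of_int (sign f) * (of_int (sign f) * x) :: rat) = x" for x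
      by (metis mult.assoc mult_1 of_int_1 of_int_mult sign_idempotent)
    show "of_int (sign f) * (\<Sum>s\<in>?SS. of_int (sign f) * (\<Sum>is\<in>idx n r. T is 0 * (\<Prod>j<r. ?R s j (is ! j)))) = (\<Sum>s\<in>?SS. T js \<tau>)"
      unfolding sum_distrib_left sq using e by (intro sum.cong) auto
  qed
  also have "\<dots> = cc r TYPE('g) * T js \<tau>"
    unfolding cc_def using card_Sset[OF r, where \<tau>=\<tau>] card_perms[of r] by simp
  finally show ?thesis .
qed


lemma inj_ev: "inj ev"
proof (rule injI)
  fix a b assume "ev a = ev b"
  then have "ev a a = ev b a" by simp
  then show "a = b" unfolding ev_def by (auto split: if_splits)
qed

lemma piv_apply: "piv n r F u = (\<Sum>is\<in>idx n r. if u = map ev is then F is else 0)"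
  unfolding piv_def fsum_apply sc_apply by (intro sum.cong) (auto simp: delta_def)

lemma piv_at: "is \<in> idx n r \<Longrightarrow> piv n r F (map ev is) = F is"
proof -
  assume "is": "is \<in> idx n r"
  have "piv n r F (map ev is) = (\<Sum>is'\<in>idx n r. if is = is' then F is' else 0)"
    unfolding piv_apply using inj_map_eq_map[OF inj_ev] by (intro sum.cong) auto
  then show ?thesis using "is" by (simp add: sum.delta)
qed

lemma piv_out: "u \<notin> map ev ` idx n r \<Longrightarrow> piv n r F u = 0"
  unfolding piv_apply by (intro sum.neutral) auto

lemma range_map_of_int:
  fixes w :: "'g::finite \<Rightarrow>\<^sub>0 rat"
  assumes "\<And>k. Poly_Mapping.lookup w k \<in> \<int>"
  shows "w \<in> range (Poly_Mapping.map (of_int :: int \<Rightarrow> rat))"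
proof -
  define y where "y = (\<Sum>\<sigma>\<in>UNIV. Poly_Mapping.single \<sigma> \<lfloor>Poly_Mapping.lookup w \<sigma>\<rfloor>)"
  have ly: "Poly_Mapping.lookup y k = \<lfloor>Poly_Mapping.lookup w k\<rfloor>" for k
    unfolding y_def lookup_sum by (simp add: lookup_single when_def)
  have "Poly_Mapping.map of_int y = w"
  proof (rule poly_mapping_eqI)
    fix k
    from assms[of k] obtain z where "Poly_Mapping.lookup w k = of_int z" by (auto elim: Ints_cases)
    then show "Poly_Mapping.lookup (Poly_Mapping.map of_int y) k = Poly_Mapping.lookup w k"
      by (simp add: lookup_map_of_int ly)
  qed
  then show ?thesis by (rule range_eqI[OF sym])
qed

lemma conj4:
  fixes \<rho> :: "'g::{ab_group_add,finite} \<Rightarrow> nat \<Rightarrow> nat \<Rightarrow> int"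
  assumes R: "is_lattice_rep n \<rho>" and r: "r \<ge> 1" and T: "T \<in> star \<rho> n r"
  shows "\<exists>x\<in>rubin \<rho> n r. P_map \<rho> n r x = T"
proof -
  let ?c = "cc r TYPE('g)"
  have c0: "?c \<noteq> 0" by (simp add: cc_def)
  define x where "x = sc (1 / ?c) (piv n r (\<lambda>is. T is 0))"
  let ?M = "map ev ` idx n r"
  have sub: "{u. x u \<noteq> 0} \<subseteq> ?M"
  proof
    fix u assume u: "u \<in> {u. x u \<noteq> 0}"
    show "u \<in> ?M"
    proof (rule ccontr)
      assume "u \<notin> ?M"
      then have "piv n r (\<lambda>is. T is 0) u = 0" by (rule piv_out)
      then show False using u unfolding x_def by simp
    qed
  qed
  have finM: "finite ?M" by simp
  have Mt: "?M \<subseteq> tuples n r" unfolding tuples_def idx_def by (auto intro!: ev_lat)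
  have xf: "x \<in> formal n r" unfolding formal_def using sub Mt finite_subset[OF sub finM] by auto
  have Px: "P_map \<rho> n r x = T"
  proof (intro ext)
    fix js \<tau>
    have "P_map \<rho> n r x js \<tau> = (\<Sum>u\<in>?M. x u * P_tuple \<rho> n r u js \<tau>)" by (rule P_map_sum[OF finM sub])
    also have "\<dots> = (\<Sum>is\<in>idx n r. x (map ev is) * P_tuple \<rho> n r (map ev is) js \<tau>)"
      by (subst sum.reindex) (auto intro: inj_on_subset[OF inj_map[THEN iffD2, OF inj_ev]])
    also have "\<dots> = 1 / ?c * (\<Sum>is\<in>idx n r. T is 0 * P_tuple \<rho> n r (map ev is) js \<tau>)"
      unfolding x_def by (simp add: piv_at sum_distrib_left mult.assoc)
    also have "\<dots> = T js \<tau>"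
    proof (cases "js \<in> idx n r")
      case True then show ?thesis using COMP[OF T r True] c0 by simp
    next
      case False then show ?thesis by (simp add: P_tuple_bad[OF not_idx[OF False]] star_Q[OF T not_idx[OF False]])
    qed
    finally show "P_map \<rho> n r x js \<tau> = T js \<tau>" .
  qed
  have Tint: "T is \<tau> \<in> \<int>" for "is" \<tau> using T unfolding star_def in_tensor_def by blast
  have "x \<in> rubin \<rho> n r" unfolding rubin_def
  proof (intro CollectI conjI xf allI impI)
    fix \<phi>s assume h: "\<forall>i<r. is_hom \<rho> n (\<phi>s i)"
    show "wedge_hom r \<phi>s x \<in> range (Poly_Mapping.map of_int)"
    proof (rule range_map_of_int)
      fix \<tau>
      have "Poly_Mapping.lookup (wedge_hom r \<phi>s x) \<tau> =
         (\<Sum>ls\<in>idx n r. of_int (\<Prod>i<r. Poly_Mapping.lookup (\<phi>s i (ev (ls ! i))) 0) * P_map \<rho> n r x ls \<tau>)"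
        using h by (intro wedge_lookup xf) auto
      also have "\<dots> \<in> \<int>" unfolding Px using Tint by (intro Ints_sum Ints_mult) auto
      finally show "Poly_Mapping.lookup (wedge_hom r \<phi>s x) \<tau> \<in> \<int>" .
    qed
  qed
  then show ?thesis using Px by blast
qed

theorem proposition3p3:
  fixes \<rho> :: "'g::{ab_group_add, finite} \<Rightarrow> nat \<Rightarrow> nat \<Rightarrow> int" and n r :: nat
  assumes "is_lattice_rep n \<rho>" and "r \<ge> 1"
  shows "(\<forall>x\<in>rel_span \<rho> n r. P_map \<rho> n r x = (\<lambda>_ _. 0))
    \<and> (\<forall>t\<in>tuples n r. \<forall>\<sigma>. P_tuple \<rho> n r (t[0 := act \<rho> n \<sigma> (t ! 0)]) = g_act \<sigma> (P_tuple \<rho> n r t))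
    \<and> (\<forall>x\<in>rubin \<rho> n r. P_map \<rho> n r x \<in> star \<rho> n r)
    \<and> (\<forall>T\<in>star \<rho> n r. \<exists>x\<in>rubin \<rho> n r. P_map \<rho> n r x = T)
    \<and> (\<forall>x\<in>rubin \<rho> n r. P_map \<rho> n r x = (\<lambda>_ _. 0) \<longrightarrow> x \<in> rel_span \<rho> n r)"
proof (intro conjI ballI allI impI)
  fix x assume "x \<in> rel_span \<rho> n r"
  then show "P_map \<rho> n r x = (\<lambda>_ _. 0)" using conj1_aux[OF assms(1)] by blast
next
  fix t \<sigma> assume t: "t \<in> tuples n r"
  show "P_tuple \<rho> n r (t[0 := act \<rho> n \<sigma> (t ! 0)]) = g_act \<sigma> (P_tuple \<rho> n r t)"
    unfolding g_act_def using P_bal[OF assms(1) t, of 0] assms(2) by (intro ext) simp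
next
  fix x assume "x \<in> rubin \<rho> n r"
  then show "P_map \<rho> n r x \<in> star \<rho> n r" by (rule conj3[OF assms])
next
  fix T assume "T \<in> star \<rho> n r"
  then show "\<exists>x\<in>rubin \<rho> n r. P_map \<rho> n r x = T" by (rule conj4[OF assms])
next
  fix x assume x: "x \<in> rubin \<rho> n r" and P0: "P_map \<rho> n r x = (\<lambda>_ _. 0)"
  have "x \<in> formal n r" using x unfolding rubin_def by simp
  then show "x \<in> rel_span \<rho> n r" by (rule conj5[OF assms _ P0])
qed


end
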